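(* Assume $(H,T)$ satisfies the Standing Assumption (Assumption A). Then $H/T$, with the quotient topology, is a Hausdorff étale groupoid with composable pairs $$(H/T)^{(2)}=\{([\gamma],[\eta]):\exists\,\gamma'\in[\gamma],\eta'\in[\eta]\text{ with }(\gamma',\eta')\in H^{(2)}\},$$ composition $[\gamma][\eta]=\{\gamma'\eta':\gamma'\in[\gamma],\eta'\in[\eta],(\gamma',\eta')\in H^{(2)}\}$ (which is a single class, equal to $[\gamma'\eta']$ for any such composable $\gamma',\eta'$), inversion $[\gamma]^{-1}=[\gamma^{-1}]$, and range and source maps $r_{H/T}([\gamma])=[r_H(\gamma)]$, $s_{H/T}([\gamma])=[s_H(\gamma)]$.
   Context: Standing Assumption (Assumption A). $H$ is a Hausdorff étale groupoid with $H^{(0)}=T$, and $p:T\to X$ is an open quotient map such that each $T_x:=p^{-1}(x)$ is a compact Abelian group (so $T$ is a bundle of compact Abelian groups over $X$; this group structure is not the groupoid structure of $H$). Put $p_s=p\circ s$, $p_r=p\circ r$ on $H$. Write $t{\blacktriangleright}\eta$ (defined when $p(t)=p_r(\eta)$) for a left action and $\eta{\blacktriangleleft}t$ (defined when $p(t)=p_s(\eta)$) for a right action of the group bundle $T$ on $H$. Then: (1) these left and right actions are continuous, commute, and are free and proper, with (a) $t{\blacktriangleright}u=u{\blacktriangleleft}t$ for all $u\in H^{(0)}$, $t\in T$; (b) $r(t{\blacktriangleright}\gamma)=t{\blacktriangleright}r(\gamma)$ for $\gamma\in p_r^{-1}(p(t))$ and $s(\eta{\blacktriangleleft}t)=s(\eta){\blacktriangleleft}t$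 for $\eta\in p_s^{-1}(p(t))$; (2) there are continuous maps $\lambda:H\,{}_{p_s}\!*_p\,T\to T$, $(\eta,t)\mapsto\lambda_\eta(t)$, and $\rho:T\,{}_p\!*_{p_r}\,H\to T$, $(t,\eta)\mapsto\rho_\eta(t)$, such that for all $\gamma,\eta\in H$ and $t\in T$ (whenever defined): (a) $\eta{\blacktriangleleft}t=\lambda_\eta(t){\blacktriangleright}\eta$; (b) $t{\blacktriangleright}\eta=\eta{\blacktriangleleft}\rho_\eta(t)$; (c) $(\gamma\eta){\blacktriangleleft}t=(\gamma{\blacktriangleleft}\lambda_\eta(t))(\eta{\blacktriangleleft}t)$; (d) $t{\blacktriangleright}(\gamma\eta)=(t{\blacktriangleright}\gamma)(\rho_\gamma(t){\blacktriangleright}\eta)$; (e) $(\eta{\blacktriangleleft}t)^{-1}=t{\blacktriangleright}\eta^{-1}$; (f) $(t{\blacktriangleright}\eta)^{-1}=\eta^{-1}{\blacktriangleleft}t$. $H/T$ is the quotient of $H$ by the right $T$-action; $[\eta]=\{\eta{\blacktriangleleft}t:t\in T_{p_s(\eta)}\}$ (equivalently the left $T$-orbit of $\eta$). *)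

theory Defs
  imports "HOL-Analysis.Analysis"
begin

definition quotient_topology :: "'a topology \<Rightarrow> ('a \<Rightarrow> 'b) \<Rightarrow> 'b topology" where
  "quotient_topology X f =
     topology (\<lambda>U. U \<subseteq> f ` topspace X \<and> openin X {x \<in> topspace X. f x \<in> U})"

lemma istopology_quotient:
  "istopology (\<lambda>U. U \<subseteq> f ` topspace X \<and> openin X {x \<in> topspace X. f x \<in> U})"
proof -
  have i: "openin X {x \<in> topspace X. f x \<in> S \<inter> T}"
    if "openin X {x \<in> topspace X. f x \<in> S}" "openin X {x \<in> topspace X. f x \<in> T}" for S T
  proof -
    have "{x \<in> topspace X. f x \<in> S \<inter> T} = {x \<in> topspace X. f x \<in> S} \<inter> {x \<in> topspace X. f x \<in> T}"
      by auto
    then show ?thesis using that by (simp add: openin_Int)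
  qed
  have u: "openin X {x \<in> topspace X. f x \<in> \<Union>K}"
    if "\<forall>S\<in>K. openin X {x \<in> topspace X. f x \<in> S}" for K
  proof -
    have "{x \<in> topspace X. f x \<in> \<Union>K} = (\<Union>S\<in>K. {x \<in> topspace X. f x \<in> S})" by auto
    then show ?thesis using that by (metis (mono_tags, lifting) imageE openin_Union)
  qed
  show ?thesis unfolding istopology_def using i u by blast
qed

lemma openin_quotient_topology:
  "openin (quotient_topology X f) U \<longleftrightarrow>
     U \<subseteq> f ` topspace X \<and> openin X {x \<in> topspace X. f x \<in> U}"
  unfolding quotient_topology_def
  by (simp add: topology_inverse'[OF istopology_quotient])

definition groupoid ::
  "'a set \<Rightarrow> ('a \<times> 'a) set \<Rightarrow> ('a \<Rightarrow> 'a \<Rightarrow> 'a) \<Rightarrow> ('a \<Rightarrow> 'a) \<Rightarrow> ('a \<Rightarrow> 'a) \<Rightarrow> ('a \<Rightarrow> 'a) \<Rightarrow> bool"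
where
  "groupoid G G2 m i r s \<longleftrightarrow>
     G2 \<subseteq> G \<times> G \<and>
     (\<forall>g \<in> G. i g \<in> G \<and> i (i g) = g) \<and>
     (\<forall>g h. (g, h) \<in> G2 \<longrightarrow> m g h \<in> G) \<and>
     (\<forall>g h k. (g, h) \<in> G2 \<and> (h, k) \<in> G2 \<longrightarrow>
        (m g h, k) \<in> G2 \<and> (g, m h k) \<in> G2 \<and> m (m g h) k = m g (m h k)) \<and>
     (\<forall>g \<in> G. (i g, g) \<in> G2) \<and>
     (\<forall>g h. (g, h) \<in> G2 \<longrightarrow> m (i g) (m g h) = h \<and> m (m g h) (i h) = g) \<and>
     (\<forall>g \<in> G. r g = m g (i g) \<and> s g = m (i g) g)"

definition unit_space :: "'a set \<Rightarrow> ('a \<Rightarrow> 'a) \<Rightarrow> 'a set" where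
  "unit_space G r = r ` G"

definition topological_groupoid ::
  "'a topology \<Rightarrow> ('a \<times> 'a) set \<Rightarrow> ('a \<Rightarrow> 'a \<Rightarrow> 'a) \<Rightarrow> ('a \<Rightarrow> 'a) \<Rightarrow> ('a \<Rightarrow> 'a) \<Rightarrow> ('a \<Rightarrow> 'a) \<Rightarrow> bool"
where
  "topological_groupoid Top G2 m i r s \<longleftrightarrow>
     groupoid (topspace Top) G2 m i r s \<and>
     continuous_map (subtopology (prod_topology Top Top) G2) Top (\<lambda>(g, h). m g h) \<and>
     continuous_map Top Top i"

definition local_homeomorphism :: "'a topology \<Rightarrow> 'b topology \<Rightarrow> ('a \<Rightarrow> 'b) \<Rightarrow> bool" where
  "local_homeomorphism X Y f \<longleftrightarrow>
     f ` topspace X \<subseteq> topspace Y \<and>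
     (\<forall>x \<in> topspace X. \<exists>U. openin X U \<and> x \<in> U \<and> openin Y (f ` U) \<and>
        homeomorphic_map (subtopology X U) (subtopology Y (f ` U)) f)"

definition hausdorff_etale_groupoid ::
  "'a topology \<Rightarrow> ('a \<times> 'a) set \<Rightarrow> ('a \<Rightarrow> 'a \<Rightarrow> 'a) \<Rightarrow> ('a \<Rightarrow> 'a) \<Rightarrow> ('a \<Rightarrow> 'a) \<Rightarrow> ('a \<Rightarrow> 'a) \<Rightarrow> bool"
where
  "hausdorff_etale_groupoid Top G2 m i r s \<longleftrightarrow>
     topological_groupoid Top G2 m i r s \<and> Hausdorff_space Top \<and>
     local_homeomorphism Top Top r"

definition compact_abelian_group_bundle ::
  "'h topology \<Rightarrow> 'h set \<Rightarrow> 'x topology \<Rightarrow> ('h \<Rightarrow> 'x) \<Rightarrow>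
   ('h \<Rightarrow> 'h \<Rightarrow> 'h) \<Rightarrow> ('x \<Rightarrow> 'h) \<Rightarrow> ('h \<Rightarrow> 'h) \<Rightarrow> bool"
where
  "compact_abelian_group_bundle Y T X p tm te ti \<longleftrightarrow>
     T \<subseteq> topspace Y \<and> p ` T \<subseteq> topspace X \<and>
     (\<forall>x \<in> topspace X. te x \<in> T \<and> p (te x) = x) \<and>
     (\<forall>t \<in> T. ti t \<in> T \<and> p (ti t) = p t) \<and>
     (\<forall>t \<in> T. \<forall>u \<in> T. p t = p u \<longrightarrow> tm t u \<in> T \<and> p (tm t u) = p t) \<and>
     (\<forall>t \<in> T. \<forall>u \<in> T. \<forall>v \<in> T. p t = p u \<and> p u = p v \<longrightarrow> tm (tm t u) v = tm t (tm u v)) \<and>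
     (\<forall>t \<in> T. \<forall>u \<in> T. p t = p u \<longrightarrow> tm t u = tm u t) \<and>
     (\<forall>t \<in> T. tm (te (p t)) t = t) \<and>
     (\<forall>t \<in> T. tm (ti t) t = te (p t)) \<and>
     (\<forall>x \<in> topspace X. compactin Y {t \<in> T. p t = x}) \<and>
     continuous_map (subtopology (prod_topology Y Y) {(t, u). t \<in> T \<and> u \<in> T \<and> p t = p u})
        (subtopology Y T) (\<lambda>(t, u). tm t u) \<and>
     continuous_map (subtopology Y T) (subtopology Y T) ti \<and>
     continuous_map X (subtopology Y T) te"

text \<open>Parameters: the Hausdorff etale groupoid H (topology Htop, composable pairs H2,
  multiplication m, inversion i, range r, source s); T = H^(0); the open quotient map
  p : T \<rightarrow> X; the group bundle operations tm, te, ti on T; the left action lact t \<eta>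
  (t \<triangleright> \<eta>) and the right action ract \<eta> t (\<eta> \<triangleleft> t); the maps lam \<eta> t = \<lambda>_\<eta>(t) and
  rho \<eta> t = \<rho>_\<eta>(t).\<close>

definition standing_assumption ::
  "'h topology \<Rightarrow> ('h \<times> 'h) set \<Rightarrow> ('h \<Rightarrow> 'h \<Rightarrow> 'h) \<Rightarrow> ('h \<Rightarrow> 'h) \<Rightarrow> ('h \<Rightarrow> 'h) \<Rightarrow> ('h \<Rightarrow> 'h) \<Rightarrow>
   'x topology \<Rightarrow> ('h \<Rightarrow> 'x) \<Rightarrow> ('h \<Rightarrow> 'h \<Rightarrow> 'h) \<Rightarrow> ('x \<Rightarrow> 'h) \<Rightarrow> ('h \<Rightarrow> 'h) \<Rightarrow>
   ('h \<Rightarrow> 'h \<Rightarrow> 'h) \<Rightarrow> ('h \<Rightarrow> 'h \<Rightarrow> 'h) \<Rightarrow> ('h \<Rightarrow> 'h \<Rightarrow> 'h) \<Rightarrow> ('h \<Rightarrow> 'h \<Rightarrow> 'h) \<Rightarrow> bool"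
where
  "standing_assumption Htop H2 m i r s X p tm te ti lact ract lam rho \<longleftrightarrow>
   (let H = topspace Htop; T = unit_space H r;
        TopT = subtopology Htop T;
        LD = {(t, \<eta>). t \<in> T \<and> \<eta> \<in> H \<and> p t = p (r \<eta>)};
        RD = {(\<eta>, t). \<eta> \<in> H \<and> t \<in> T \<and> p t = p (s \<eta>)}
    in
     hausdorff_etale_groupoid Htop H2 m i r s \<and>
     quotient_map TopT X p \<and> open_map TopT X p \<and>
     compact_abelian_group_bundle Htop T X p tm te ti \<and>
     \<comment> \<open>left action of the group bundle T on H along p \<circ> r\<close>
     (\<forall>(t, \<eta>) \<in> LD. lact t \<eta> \<in> H \<and> p (r (lact t \<eta>)) = p t) \<and>
     (\<forall>\<eta> \<in> H. lact (te (p (r \<eta>))) \<eta> = \<eta>) \<and>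
     (\<forall>(t, \<eta>) \<in> LD. \<forall>u \<in> T. p u = p t \<longrightarrow> lact u (lact t \<eta>) = lact (tm u t) \<eta>) \<and>
     \<comment> \<open>right action of the group bundle T on H along p \<circ> s\<close>
     (\<forall>(\<eta>, t) \<in> RD. ract \<eta> t \<in> H \<and> p (s (ract \<eta> t)) = p t) \<and>
     (\<forall>\<eta> \<in> H. ract \<eta> (te (p (s \<eta>))) = \<eta>) \<and>
     (\<forall>(\<eta>, t) \<in> RD. \<forall>u \<in> T. p u = p t \<longrightarrow> ract (ract \<eta> t) u = ract \<eta> (tm t u)) \<and>
     \<comment> \<open>(1): continuous\<close>
     continuous_map (subtopology (prod_topology Htop Htop) LD) Htop (\<lambda>(t, \<eta>). lact t \<eta>) \<and>
     continuous_map (subtopology (prod_topology Htop Htop) RD) Htop (\<lambda>(\<eta>, t). ract \<eta> t) \<and>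
     \<comment> \<open>(1): the actions commute\<close>
     (\<forall>t \<in> T. \<forall>u \<in> T. \<forall>\<eta> \<in> H. p t = p (r \<eta>) \<and> p u = p (s \<eta>) \<longrightarrow>
        ract (lact t \<eta>) u = lact t (ract \<eta> u)) \<and>
     \<comment> \<open>(1): free\<close>
     (\<forall>(t, \<eta>) \<in> LD. lact t \<eta> = \<eta> \<longrightarrow> t = te (p t)) \<and>
     (\<forall>(\<eta>, t) \<in> RD. ract \<eta> t = \<eta> \<longrightarrow> t = te (p t)) \<and>
     \<comment> \<open>(1): proper\<close>
     proper_map (subtopology (prod_topology Htop Htop) LD) (prod_topology Htop Htop)
        (\<lambda>(t, \<eta>). (lact t \<eta>, \<eta>)) \<and>
     proper_map (subtopology (prod_topology Htop Htop) RD) (prod_topology Htop Htop)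
        (\<lambda>(\<eta>, t). (ract \<eta> t, \<eta>)) \<and>
     \<comment> \<open>(1)(a)\<close>
     (\<forall>u \<in> T. \<forall>t \<in> T. p t = p u \<longrightarrow> lact t u = ract u t) \<and>
     \<comment> \<open>(1)(b)\<close>
     (\<forall>(t, \<gamma>) \<in> LD. r (lact t \<gamma>) = lact t (r \<gamma>)) \<and>
     (\<forall>(\<eta>, t) \<in> RD. s (ract \<eta> t) = ract (s \<eta>) t) \<and>
     \<comment> \<open>(2): continuity of lambda and rho, and their values lie in the right fibres\<close>
     continuous_map (subtopology (prod_topology Htop Htop) RD) TopT (\<lambda>(\<eta>, t). lam \<eta> t) \<and>
     continuous_map (subtopology (prod_topology Htop Htop) LD) TopT (\<lambda>(t, \<eta>). rho \<eta> t) \<and>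
     (\<forall>(\<eta>, t) \<in> RD. p (lam \<eta> t) = p (r \<eta>)) \<and>
     (\<forall>(t, \<eta>) \<in> LD. p (rho \<eta> t) = p (s \<eta>)) \<and>
     \<comment> \<open>(2)(a), (2)(b)\<close>
     (\<forall>(\<eta>, t) \<in> RD. ract \<eta> t = lact (lam \<eta> t) \<eta>) \<and>
     (\<forall>(t, \<eta>) \<in> LD. lact t \<eta> = ract \<eta> (rho \<eta> t)) \<and>
     \<comment> \<open>(2)(c), (2)(d)\<close>
     (\<forall>(\<gamma>, \<eta>) \<in> H2. \<forall>t \<in> T. p t = p (s \<eta>) \<longrightarrow>
        ract (m \<gamma> \<eta>) t = m (ract \<gamma> (lam \<eta> t)) (ract \<eta> t)) \<and>
     (\<forall>(\<gamma>, \<eta>) \<in> H2. \<forall>t \<in> T. p t = p (r \<gamma>) \<longrightarrow>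
        lact t (m \<gamma> \<eta>) = m (lact t \<gamma>) (lact (rho \<gamma> t) \<eta>)) \<and>
     \<comment> \<open>(2)(e), (2)(f)\<close>
     (\<forall>(\<eta>, t) \<in> RD. i (ract \<eta> t) = lact t (i \<eta>)) \<and>
     (\<forall>(t, \<eta>) \<in> LD. i (lact t \<eta>) = ract (i \<eta>) t))"

definition orbit_class :: "'h set \<Rightarrow> ('h \<Rightarrow> 'x) \<Rightarrow> ('h \<Rightarrow> 'h) \<Rightarrow> ('h \<Rightarrow> 'h \<Rightarrow> 'h) \<Rightarrow> 'h \<Rightarrow> 'h set" where
  "orbit_class T p s ract \<eta> = {ract \<eta> t | t. t \<in> T \<and> p t = p (s \<eta>)}"

definition quot_composable :: "('h \<times> 'h) set \<Rightarrow> 'h set set \<Rightarrow> ('h set \<times> 'h set) set" where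
  "quot_composable H2 Q = {(A, B). A \<in> Q \<and> B \<in> Q \<and> (\<exists>\<gamma>' \<in> A. \<exists>\<eta>' \<in> B. (\<gamma>', \<eta>') \<in> H2)}"

definition quot_mult :: "('h \<times> 'h) set \<Rightarrow> ('h \<Rightarrow> 'h \<Rightarrow> 'h) \<Rightarrow> 'h set \<Rightarrow> 'h set \<Rightarrow> 'h set" where
  "quot_mult H2 m A B = {m \<gamma>' \<eta>' | \<gamma>' \<eta>'. \<gamma>' \<in> A \<and> \<eta>' \<in> B \<and> (\<gamma>', \<eta>') \<in> H2}"

text \<open>Inversion, range and source on H/T, computed from a representative; the theorem
  asserts they do not depend on the representative.\<close>

definition quot_lift :: "('h \<Rightarrow> 'h set) \<Rightarrow> ('h \<Rightarrow> 'h) \<Rightarrow> 'h set \<Rightarrow> 'h set" where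
  "quot_lift cls f A = cls (f (SOME \<gamma>. \<gamma> \<in> A))"

end

theory Submission
  imports Defs
begin

locale SA =
  fixes Htop :: "'h topology" and H2 :: "('h \<times> 'h) set" and m :: "'h \<Rightarrow> 'h \<Rightarrow> 'h"
    and i r s :: "'h \<Rightarrow> 'h" and X :: "'x topology" and p :: "'h \<Rightarrow> 'x"
    and tm :: "'h \<Rightarrow> 'h \<Rightarrow> 'h" and te :: "'x \<Rightarrow> 'h" and ti :: "'h \<Rightarrow> 'h"
    and lact ract lam rho :: "'h \<Rightarrow> 'h \<Rightarrow> 'h"
  assumes A: "standing_assumption Htop H2 m i r s X p tm te ti lact ract lam rho"
begin

abbreviation "H \<equiv> topspace Htop"
abbreviation "T \<equiv> r ` topspace Htop"
abbreviation "LD \<equiv> {(t, \<eta>). t \<in> T \<and> \<eta> \<in> H \<and> p t = p (r \<eta>)}"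
abbreviation "RD \<equiv> {(\<eta>, t). \<eta> \<in> H \<and> t \<in> T \<and> p t = p (s \<eta>)}"
abbreviation "HH \<equiv> prod_topology Htop Htop"

lemmas AU = A[unfolded standing_assumption_def Let_def unit_space_def]
lemmas a1 = AU[THEN conjunct1]
lemmas a2 = AU[THEN conjunct2, THEN conjunct1]
lemmas a3 = AU[THEN conjunct2, THEN conjunct2, THEN conjunct1]
lemmas a4 = AU[THEN conjunct2, THEN conjunct2, THEN conjunct2, THEN conjunct1]
lemmas a5 = AU[THEN conjunct2, THEN conjunct2, THEN conjunct2, THEN conjunct2, THEN conjunct1]
lemmas a6 = AU[THEN conjunct2, THEN conjunct2, THEN conjunct2, THEN conjunct2, THEN conjunct2, THEN conjunct1]
lemmas a7 = AU[THEN conjunct2, THEN conjunct2, THEN conjunct2, THEN conjunct2, THEN conjunct2, THEN conjunct2, THEN conjunct1]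
lemmas a8 = AU[THEN conjunct2, THEN conjunct2, THEN conjunct2, THEN conjunct2, THEN conjunct2, THEN conjunct2, THEN conjunct2, THEN conjunct1]
lemmas a9 = AU[THEN conjunct2, THEN conjunct2, THEN conjunct2, THEN conjunct2, THEN conjunct2, THEN conjunct2, THEN conjunct2, THEN conjunct2, THEN conjunct1]
lemmas a10 = AU[THEN conjunct2, THEN conjunct2, THEN conjunct2, THEN conjunct2, THEN conjunct2, THEN conjunct2, THEN conjunct2, THEN conjunct2, THEN conjunct2, THEN conjunct1]
lemmas a11 = AU[THEN conjunct2, THEN conjunct2, THEN conjunct2, THEN conjunct2, THEN conjunct2, THEN conjunct2, THEN conjunct2, THEN conjunct2, THEN conjunct2, THEN conjunct2, THEN conjunct1]
lemmas a12 = AU[THEN conjunct2, THEN conjunct2, THEN conjunct2, THEN conjunct2, THEN conjunct2, THEN conjunct2, THEN conjunct2, THEN conjunct2, THEN conjunct2, THEN conjunct2, THEN conjunct2, THEN conjunct1]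
lemmas a13 = AU[THEN conjunct2, THEN conjunct2, THEN conjunct2, THEN conjunct2, THEN conjunct2, THEN conjunct2, THEN conjunct2, THEN conjunct2, THEN conjunct2, THEN conjunct2, THEN conjunct2, THEN conjunct2, THEN conjunct1]
lemmas a14 = AU[THEN conjunct2, THEN conjunct2, THEN conjunct2, THEN conjunct2, THEN conjunct2, THEN conjunct2, THEN conjunct2, THEN conjunct2, THEN conjunct2, THEN conjunct2, THEN conjunct2, THEN conjunct2, THEN conjunct2, THEN conjunct1]
lemmas a15 = AU[THEN conjunct2, THEN conjunct2, THEN conjunct2, THEN conjunct2, THEN conjunct2, THEN conjunct2, THEN conjunct2, THEN conjunct2, THEN conjunct2, THEN conjunct2, THEN conjunct2, THEN conjunct2, THEN conjunct2, THEN conjunct2, THEN conjunct1]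
lemmas a16 = AU[THEN conjunct2, THEN conjunct2, THEN conjunct2, THEN conjunct2, THEN conjunct2, THEN conjunct2, THEN conjunct2, THEN conjunct2, THEN conjunct2, THEN conjunct2, THEN conjunct2, THEN conjunct2, THEN conjunct2, THEN conjunct2, THEN conjunct2, THEN conjunct1]
lemmas a17 = AU[THEN conjunct2, THEN conjunct2, THEN conjunct2, THEN conjunct2, THEN conjunct2, THEN conjunct2, THEN conjunct2, THEN conjunct2, THEN conjunct2, THEN conjunct2, THEN conjunct2, THEN conjunct2, THEN conjunct2, THEN conjunct2, THEN conjunct2, THEN conjunct2, THEN conjunct1]
lemmas a18 = AU[THEN conjunct2, THEN conjunct2, THEN conjunct2, THEN conjunct2, THEN conjunct2, THEN conjunct2, THEN conjunct2, THEN conjunct2, THEN conjunct2, THEN conjunct2, THEN conjunct2, THEN conjunct2, THEN conjunct2, THEN conjunct2, THEN conjunct2, THEN conjunct2, THEN conjunct2, THEN conjunct1]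
lemmas a19 = AU[THEN conjunct2, THEN conjunct2, THEN conjunct2, THEN conjunct2, THEN conjunct2, THEN conjunct2, THEN conjunct2, THEN conjunct2, THEN conjunct2, THEN conjunct2, THEN conjunct2, THEN conjunct2, THEN conjunct2, THEN conjunct2, THEN conjunct2, THEN conjunct2, THEN conjunct2, THEN conjunct2, THEN conjunct1]
lemmas a20 = AU[THEN conjunct2, THEN conjunct2, THEN conjunct2, THEN conjunct2, THEN conjunct2, THEN conjunct2, THEN conjunct2, THEN conjunct2, THEN conjunct2, THEN conjunct2, THEN conjunct2, THEN conjunct2, THEN conjunct2, THEN conjunct2, THEN conjunct2, THEN conjunct2, THEN conjunct2, THEN conjunct2, THEN conjunct2, THEN conjunct1]
lemmas a21 = AU[THEN conjunct2, THEN conjunct2, THEN conjunct2, THEN conjunct2, THEN conjunct2, THEN conjunct2, THEN conjunct2, THEN conjunct2, THEN conjunct2, THEN conjunct2, THEN conjunct2, THEN conjunct2, THEN conjunct2, THEN conjunct2, THEN conjunct2, THEN conjunct2, THEN conjunct2, THEN conjunct2, THEN conjunct2, THEN conjunct2, THEN conjunct1]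
lemmas a22 = AU[THEN conjunct2, THEN conjunct2, THEN conjunct2, THEN conjunct2, THEN conjunct2, THEN conjunct2, THEN conjunct2, THEN conjunct2, THEN conjunct2, THEN conjunct2, THEN conjunct2, THEN conjunct2, THEN conjunct2, THEN conjunct2, THEN conjunct2, THEN conjunct2, THEN conjunct2, THEN conjunct2, THEN conjunct2, THEN conjunct2, THEN conjunct2, THEN conjunct1]
lemmas a23 = AU[THEN conjunct2, THEN conjunct2, THEN conjunct2, THEN conjunct2, THEN conjunct2, THEN conjunct2, THEN conjunct2, THEN conjunct2, THEN conjunct2, THEN conjunct2, THEN conjunct2, THEN conjunct2, THEN conjunct2, THEN conjunct2, THEN conjunct2, THEN conjunct2, THEN conjunct2, THEN conjunct2, THEN conjunct2, THEN conjunct2, THEN conjunct2, THEN conjunct2, THEN conjunct1]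
lemmas a24 = AU[THEN conjunct2, THEN conjunct2, THEN conjunct2, THEN conjunct2, THEN conjunct2, THEN conjunct2, THEN conjunct2, THEN conjunct2, THEN conjunct2, THEN conjunct2, THEN conjunct2, THEN conjunct2, THEN conjunct2, THEN conjunct2, THEN conjunct2, THEN conjunct2, THEN conjunct2, THEN conjunct2, THEN conjunct2, THEN conjunct2, THEN conjunct2, THEN conjunct2, THEN conjunct2, THEN conjunct1]
lemmas a25 = AU[THEN conjunct2, THEN conjunct2, THEN conjunct2, THEN conjunct2, THEN conjunct2, THEN conjunct2, THEN conjunct2, THEN conjunct2, THEN conjunct2, THEN conjunct2, THEN conjunct2, THEN conjunct2, THEN conjunct2, THEN conjunct2, THEN conjunct2, THEN conjunct2, THEN conjunct2, THEN conjunct2, THEN conjunct2, THEN conjunct2, THEN conjunct2, THEN conjunct2, THEN conjunct2, THEN conjunct2, THEN conjunct1]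
lemmas a26 = AU[THEN conjunct2, THEN conjunct2, THEN conjunct2, THEN conjunct2, THEN conjunct2, THEN conjunct2, THEN conjunct2, THEN conjunct2, THEN conjunct2, THEN conjunct2, THEN conjunct2, THEN conjunct2, THEN conjunct2, THEN conjunct2, THEN conjunct2, THEN conjunct2, THEN conjunct2, THEN conjunct2, THEN conjunct2, THEN conjunct2, THEN conjunct2, THEN conjunct2, THEN conjunct2, THEN conjunct2, THEN conjunct2, THEN conjunct1]
lemmas a27 = AU[THEN conjunct2, THEN conjunct2, THEN conjunct2, THEN conjunct2, THEN conjunct2, THEN conjunct2, THEN conjunct2, THEN conjunct2, THEN conjunct2, THEN conjunct2, THEN conjunct2, THEN conjunct2, THEN conjunct2, THEN conjunct2, THEN conjunct2, THEN conjunct2, THEN conjunct2, THEN conjunct2, THEN conjunct2, THEN conjunct2, THEN conjunct2, THEN conjunct2, THEN conjunct2, THEN conjunct2, THEN conjunct2, THEN conjunct2, THEN conjunct1]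
lemmas a28 = AU[THEN conjunct2, THEN conjunct2, THEN conjunct2, THEN conjunct2, THEN conjunct2, THEN conjunct2, THEN conjunct2, THEN conjunct2, THEN conjunct2, THEN conjunct2, THEN conjunct2, THEN conjunct2, THEN conjunct2, THEN conjunct2, THEN conjunct2, THEN conjunct2, THEN conjunct2, THEN conjunct2, THEN conjunct2, THEN conjunct2, THEN conjunct2, THEN conjunct2, THEN conjunct2, THEN conjunct2, THEN conjunct2, THEN conjunct2, THEN conjunct2, THEN conjunct1]
lemmas a29 = AU[THEN conjunct2, THEN conjunct2, THEN conjunct2, THEN conjunct2, THEN conjunct2, THEN conjunct2, THEN conjunct2, THEN conjunct2, THEN conjunct2, THEN conjunct2, THEN conjunct2, THEN conjunct2, THEN conjunct2, THEN conjunct2, THEN conjunct2, THEN conjunct2, THEN conjunct2, THEN conjunct2, THEN conjunct2, THEN conjunct2, THEN conjunct2, THEN conjunct2, THEN conjunct2, THEN conjunct2, THEN conjunct2, THEN conjunct2, THEN conjunct2, THEN conjunct2, THEN conjunct1]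
lemmas a30 = AU[THEN conjunct2, THEN conjunct2, THEN conjunct2, THEN conjunct2, THEN conjunct2, THEN conjunct2, THEN conjunct2, THEN conjunct2, THEN conjunct2, THEN conjunct2, THEN conjunct2, THEN conjunct2, THEN conjunct2, THEN conjunct2, THEN conjunct2, THEN conjunct2, THEN conjunct2, THEN conjunct2, THEN conjunct2, THEN conjunct2, THEN conjunct2, THEN conjunct2, THEN conjunct2, THEN conjunct2, THEN conjunct2, THEN conjunct2, THEN conjunct2, THEN conjunct2, THEN conjunct2]

lemma G: "groupoid H H2 m i r s" using a1 unfolding hausdorff_etale_groupoid_def topological_groupoid_def by blast
lemma Hhaus: "Hausdorff_space Htop" using a1 unfolding hausdorff_etale_groupoid_def by blast
lemma Hloc: "local_homeomorphism Htop Htop r" using a1 unfolding hausdorff_etale_groupoid_def by blast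
lemma mcont: "continuous_map (subtopology HH H2) Htop (\<lambda>(g, h). m g h)"
  using a1 unfolding hausdorff_etale_groupoid_def topological_groupoid_def by blast
lemma icont: "continuous_map Htop Htop i"
  using a1 unfolding hausdorff_etale_groupoid_def topological_groupoid_def by blast

lemma H2H: "(g,h) \<in> H2 \<Longrightarrow> g \<in> H \<and> h \<in> H" using G unfolding groupoid_def by blast
lemma iH: "g \<in> H \<Longrightarrow> i g \<in> H" using G unfolding groupoid_def by blast
lemma ii: "g \<in> H \<Longrightarrow> i (i g) = g" using G unfolding groupoid_def by blast
lemma mH: "(g,h) \<in> H2 \<Longrightarrow> m g h \<in> H" using G unfolding groupoid_def by blast
lemma assoc: "(g,h) \<in> H2 \<Longrightarrow> (h,k) \<in> H2 \<Longrightarrow>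
    (m g h, k) \<in> H2 \<and> (g, m h k) \<in> H2 \<and> m (m g h) k = m g (m h k)"
  using G unfolding groupoid_def by blast
lemma iC: "g \<in> H \<Longrightarrow> (i g, g) \<in> H2" using G unfolding groupoid_def by blast
lemma canc: "(g,h) \<in> H2 \<Longrightarrow> m (i g) (m g h) = h \<and> m (m g h) (i h) = g"
  using G unfolding groupoid_def by blast
lemma rdef: "g \<in> H \<Longrightarrow> r g = m g (i g)" using G unfolding groupoid_def by blast
lemma sdef: "g \<in> H \<Longrightarrow> s g = m (i g) g" using G unfolding groupoid_def by blast

lemma Ci: "g \<in> H \<Longrightarrow> (g, i g) \<in> H2" using iC[of "i g"] iH ii by simp
lemma rH: "g \<in> H \<Longrightarrow> r g \<in> H" using rdef Ci mH by simp
lemma sH: "g \<in> H \<Longrightarrow> s g \<in> H" using sdef iC mH by simp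

lemma comp_sr: assumes "(g,h) \<in> H2" shows "s g = r h"
proof -
  have g: "g \<in> H" and h: "h \<in> H" using H2H assms by auto
  have 1: "(g, r h) \<in> H2" "m g (r h) = g"
    using assoc[OF assms Ci[OF h]] canc[OF assms] rdef[OF h] by auto
  have "s g = m (m (i g) g) (r h)"
    using assoc[OF iC[OF g] 1(1)] 1(2) sdef[OF g] by simp
  also have "... = m (s g) (m h (i h))" using sdef[OF g] rdef[OF h] by simp
  also have "... = m (m (s g) h) (i h)"
    using assoc[OF iC[OF g] assms] assoc[of "s g" h "i h"] Ci[OF h] sdef[OF g] by metis
  also have "m (s g) h = h" using assoc[OF iC[OF g] assms] canc[OF assms] sdef[OF g] by simp
  finally show ?thesis using rdef[OF h] by simp
qed

lemma sr_comp: assumes g: "g \<in> H" and h: "h \<in> H" and e: "s g = r h" shows "(g,h) \<in> H2"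
proof -
  have "(g, s g) \<in> H2" using assoc[OF Ci[OF g] iC[OF g]] sdef[OF g] by simp
  moreover have "(r h, h) \<in> H2" "m (r h) h = h"
    using assoc[OF Ci[OF h] iC[OF h]] rdef[OF h] ii[OF h] canc[OF iC[OF h]] by auto
  ultimately show ?thesis using assoc[of g "r h" h] e by metis
qed

lemma comp_iff: "g \<in> H \<Longrightarrow> h \<in> H \<Longrightarrow> (g,h) \<in> H2 \<longleftrightarrow> s g = r h"
  using comp_sr sr_comp by blast

lemma s_m: "(g,h) \<in> H2 \<Longrightarrow> s (m g h) = s h"
proof -
  assume a: "(g,h) \<in> H2"
  then have h: "h \<in> H" using H2H by auto
  have "(m g h, i h) \<in> H2" using assoc[OF a Ci[OF h]] by simp
  then have "s (m g h) = r (i h)" by (rule comp_sr)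
  also have "... = s h" using rdef[OF iH[OF h]] ii[OF h] sdef[OF h] by simp
  finally show ?thesis .
qed

lemma r_m: "(g,h) \<in> H2 \<Longrightarrow> r (m g h) = r g"
proof -
  assume a: "(g,h) \<in> H2"
  then have g: "g \<in> H" using H2H by auto
  have "(i g, m g h) \<in> H2" using assoc[OF iC[OF g] a] by simp
  then have "s (i g) = r (m g h)" by (rule comp_sr)
  moreover have "s (i g) = r g" using sdef[OF iH[OF g]] ii[OF g] rdef[OF g] by simp
  ultimately show ?thesis by simp
qed

lemma r_i: "g \<in> H \<Longrightarrow> r (i g) = s g" using rdef[OF iH] ii sdef by simp
lemma s_i: "g \<in> H \<Longrightarrow> s (i g) = r g" using sdef[OF iH] ii rdef by simp

lemma TH: "u \<in> T \<Longrightarrow> u \<in> H" using rH by auto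
lemma s_unit: "u \<in> T \<Longrightarrow> s u = u"
  using s_m[OF Ci] rdef s_i by auto
lemma r_unit: "u \<in> T \<Longrightarrow> r u = u"
  using r_m[OF Ci] rdef by auto
lemma sT: "g \<in> H \<Longrightarrow> s g \<in> T" using r_i iH by (metis image_eqI)
lemma rT: "g \<in> H \<Longrightarrow> r g \<in> T" by simp

end

context SA begin

lemma B: "compact_abelian_group_bundle Htop T X p tm te ti" using a4 .
lemmas BU = B[unfolded compact_abelian_group_bundle_def]
lemmas b1 = BU[THEN conjunct1]
lemmas b2 = BU[THEN conjunct2, THEN conjunct1]
lemmas b3 = BU[THEN conjunct2, THEN conjunct2, THEN conjunct1]
lemmas b4 = BU[THEN conjunct2, THEN conjunct2, THEN conjunct2, THEN conjunct1]
lemmas b5 = BU[THEN conjunct2, THEN conjunct2, THEN conjunct2, THEN conjunct2, THEN conjunct1]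
lemmas b6 = BU[THEN conjunct2, THEN conjunct2, THEN conjunct2, THEN conjunct2, THEN conjunct2, THEN conjunct1]
lemmas b7 = BU[THEN conjunct2, THEN conjunct2, THEN conjunct2, THEN conjunct2, THEN conjunct2, THEN conjunct2, THEN conjunct1]
lemmas b8 = BU[THEN conjunct2, THEN conjunct2, THEN conjunct2, THEN conjunct2, THEN conjunct2, THEN conjunct2, THEN conjunct2, THEN conjunct1]
lemmas b9 = BU[THEN conjunct2, THEN conjunct2, THEN conjunct2, THEN conjunct2, THEN conjunct2, THEN conjunct2, THEN conjunct2, THEN conjunct2, THEN conjunct1]
lemmas b10 = BU[THEN conjunct2, THEN conjunct2, THEN conjunct2, THEN conjunct2, THEN conjunct2, THEN conjunct2, THEN conjunct2, THEN conjunct2, THEN conjunct2, THEN conjunct1]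
lemmas b11 = BU[THEN conjunct2, THEN conjunct2, THEN conjunct2, THEN conjunct2, THEN conjunct2, THEN conjunct2, THEN conjunct2, THEN conjunct2, THEN conjunct2, THEN conjunct2, THEN conjunct1]
lemmas b12 = BU[THEN conjunct2, THEN conjunct2, THEN conjunct2, THEN conjunct2, THEN conjunct2, THEN conjunct2, THEN conjunct2, THEN conjunct2, THEN conjunct2, THEN conjunct2, THEN conjunct2, THEN conjunct1]
lemmas b13 = BU[THEN conjunct2, THEN conjunct2, THEN conjunct2, THEN conjunct2, THEN conjunct2, THEN conjunct2, THEN conjunct2, THEN conjunct2, THEN conjunct2, THEN conjunct2, THEN conjunct2, THEN conjunct2]
lemma TX: "t \<in> T \<Longrightarrow> p t \<in> topspace X" using b2 by blast
lemma te_T: "x \<in> topspace X \<Longrightarrow> te x \<in> T \<and> p (te x) = x" using b3 by blast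
lemma ti_T: "t \<in> T \<Longrightarrow> ti t \<in> T \<and> p (ti t) = p t" using b4 by blast
lemma tm_T: "t \<in> T \<Longrightarrow> u \<in> T \<Longrightarrow> p t = p u \<Longrightarrow> tm t u \<in> T \<and> p (tm t u) = p t"
  using b5 by blast
lemma tm_assoc: "t \<in> T \<Longrightarrow> u \<in> T \<Longrightarrow> v \<in> T \<Longrightarrow> p t = p u \<Longrightarrow> p u = p v \<Longrightarrow> tm (tm t u) v = tm t (tm u v)"
  using b6 by blast
lemma tm_comm: "t \<in> T \<Longrightarrow> u \<in> T \<Longrightarrow> p t = p u \<Longrightarrow> tm t u = tm u t"
  using b7 by blast
lemma tm_unit: "t \<in> T \<Longrightarrow> tm (te (p t)) t = t"
  using b8 by blast
lemma tm_inv: "t \<in> T \<Longrightarrow> tm (ti t) t = te (p t)"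
  using b9 by blast
lemma tm_inv2: assumes t: "t \<in> T" shows "tm t (ti t) = te (p t)"
proof -
  have "tm t (ti t) = tm (ti t) t" using tm_comm[of t "ti t"] ti_T[OF t] t by simp
  then show ?thesis using tm_inv[OF t] by simp
qed
lemma tm_unit2: assumes t: "t \<in> T" shows "tm t (te (p t)) = t"
proof -
  have e: "te (p t) \<in> T" "p (te (p t)) = p t" using te_T[OF TX[OF t]] by auto
  have "tm t (te (p t)) = tm (te (p t)) t" using tm_comm[OF t e(1)] e by simp
  then show ?thesis using tm_unit[OF t] by simp
qed

lemma lact_H: "t \<in> T \<Longrightarrow> \<eta> \<in> H \<Longrightarrow> p t = p (r \<eta>) \<Longrightarrow> lact t \<eta> \<in> H \<and> p (r (lact t \<eta>)) = p t"
  using a5 by fastforce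
lemma lact_te: "\<eta> \<in> H \<Longrightarrow> lact (te (p (r \<eta>))) \<eta> = \<eta>" using a6 by blast
lemma ract_H: "\<eta> \<in> H \<Longrightarrow> t \<in> T \<Longrightarrow> p t = p (s \<eta>) \<Longrightarrow> ract \<eta> t \<in> H \<and> p (s (ract \<eta> t)) = p t"
  using a8 by fastforce
lemma ract_te: "\<eta> \<in> H \<Longrightarrow> ract \<eta> (te (p (s \<eta>))) = \<eta>" using a9 by blast
lemma ract_comp: "\<eta> \<in> H \<Longrightarrow> t \<in> T \<Longrightarrow> p t = p (s \<eta>) \<Longrightarrow> u \<in> T \<Longrightarrow> p u = p t \<Longrightarrow>
   ract (ract \<eta> t) u = ract \<eta> (tm t u)" using a10 by fastforce
lemma lact_cont: "continuous_map (subtopology HH LD) Htop (\<lambda>(t, \<eta>). lact t \<eta>)" using a11 .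
lemma ract_cont: "continuous_map (subtopology HH RD) Htop (\<lambda>(\<eta>, t). ract \<eta> t)" using a12 .
lemma free_r0: "\<eta> \<in> H \<Longrightarrow> t \<in> T \<Longrightarrow> p t = p (s \<eta>) \<Longrightarrow> ract \<eta> t = \<eta> \<Longrightarrow> t = te (p t)"
  using a15 by fastforce
lemma proper_r: "proper_map (subtopology HH RD) HH (\<lambda>(\<eta>, t). (ract \<eta> t, \<eta>))" using a17 .
lemma la_unit: "u \<in> T \<Longrightarrow> t \<in> T \<Longrightarrow> p t = p u \<Longrightarrow> lact t u = ract u t" using a18 by blast
lemma r_lact: "t \<in> T \<Longrightarrow> \<gamma> \<in> H \<Longrightarrow> p t = p (r \<gamma>) \<Longrightarrow> r (lact t \<gamma>) = lact t (r \<gamma>)"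
  using a19 by fastforce
lemma s_ract: "\<eta> \<in> H \<Longrightarrow> t \<in> T \<Longrightarrow> p t = p (s \<eta>) \<Longrightarrow> s (ract \<eta> t) = ract (s \<eta>) t"
  using a20 by fastforce
lemma lam_T: "\<eta> \<in> H \<Longrightarrow> t \<in> T \<Longrightarrow> p t = p (s \<eta>) \<Longrightarrow> lam \<eta> t \<in> T"
proof -
  assume "\<eta> \<in> H" "t \<in> T" "p t = p (s \<eta>)"
  then have "(\<eta>, t) \<in> topspace (subtopology HH RD)" using rH by auto
  then show ?thesis using continuous_map_image_subset_topspace[OF a21] by force
qed
lemma rho_T: "t \<in> T \<Longrightarrow> \<eta> \<in> H \<Longrightarrow> p t = p (r \<eta>) \<Longrightarrow> rho \<eta> t \<in> T"
proof -
  assume "\<eta> \<in> H" "t \<in> T" "p t = p (r \<eta>)"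
  then have "(t, \<eta>) \<in> topspace (subtopology HH LD)" using TH by auto
  then show ?thesis using continuous_map_image_subset_topspace[OF a22] by force
qed
lemma p_lam: "\<eta> \<in> H \<Longrightarrow> t \<in> T \<Longrightarrow> p t = p (s \<eta>) \<Longrightarrow> p (lam \<eta> t) = p (r \<eta>)" using a23 by fastforce
lemma p_rho: "t \<in> T \<Longrightarrow> \<eta> \<in> H \<Longrightarrow> p t = p (r \<eta>) \<Longrightarrow> p (rho \<eta> t) = p (s \<eta>)" using a24 by fastforce
lemma r_to_l: "\<eta> \<in> H \<Longrightarrow> t \<in> T \<Longrightarrow> p t = p (s \<eta>) \<Longrightarrow> ract \<eta> t = lact (lam \<eta> t) \<eta>" using a25 by fastforce
lemma l_to_r: "t \<in> T \<Longrightarrow> \<eta> \<in> H \<Longrightarrow> p t = p (r \<eta>) \<Longrightarrow> lact t \<eta> = ract \<eta> (rho \<eta> t)" using a26 by fastforce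
lemma ract_m: "(\<gamma>, \<eta>) \<in> H2 \<Longrightarrow> t \<in> T \<Longrightarrow> p t = p (s \<eta>) \<Longrightarrow>
        ract (m \<gamma> \<eta>) t = m (ract \<gamma> (lam \<eta> t)) (ract \<eta> t)" using a27 by fastforce
lemma i_ract: "\<eta> \<in> H \<Longrightarrow> t \<in> T \<Longrightarrow> p t = p (s \<eta>) \<Longrightarrow> i (ract \<eta> t) = lact t (i \<eta>)" using a29 by fastforce

lemma pT_te: "t \<in> T \<Longrightarrow> te (p t) \<in> T \<and> p (te (p t)) = p t" using te_T TX by blast

lemma free_eq:
  assumes e: "\<eta> \<in> H" and a: "a \<in> T" "p a = p (s \<eta>)" and b: "b \<in> T" "p b = p (s \<eta>)"
    and eq: "ract \<eta> a = ract \<eta> b"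
  shows "a = b"
proof -
  have tib: "ti b \<in> T" "p (ti b) = p b" using ti_T b by auto
  have "ract \<eta> (tm a (ti b)) = ract (ract \<eta> a) (ti b)" using ract_comp[OF e a tib(1)] tib a b by simp
  also have "... = ract (ract \<eta> b) (ti b)" using eq by simp
  also have "... = ract \<eta> (tm b (ti b))" using ract_comp[OF e b tib(1)] tib by simp
  also have "... = \<eta>" using tm_inv2[OF b(1)] b ract_te[OF e] by simp
  finally have "ract \<eta> (tm a (ti b)) = \<eta>" .
  moreover have ab: "tm a (ti b) \<in> T" "p (tm a (ti b)) = p a" using tm_T[OF a(1) tib(1)] tib a b by auto
  ultimately have 1: "tm a (ti b) = te (p a)" using free_r0[OF e ab(1)] a by simp
  have "a = tm a (tm (ti b) b)" using tm_inv[OF b(1)] tm_unit2[OF a(1)] a b by simp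
  also have "... = tm (tm a (ti b)) b" using tm_assoc[OF a(1) tib(1) b(1)] tib a b by simp
  also have "... = b" using 1 tm_unit[OF b(1)] a b by simp
  finally show ?thesis .
qed

abbreviation "cls \<equiv> orbit_class T p s ract"

lemma cls_def': "cls \<eta> = {ract \<eta> t | t. t \<in> T \<and> p t = p (s \<eta>)}" unfolding orbit_class_def by simp

lemma cls_mem_iff: "\<zeta> \<in> cls \<eta> \<longleftrightarrow> (\<exists>t. t \<in> T \<and> p t = p (s \<eta>) \<and> \<zeta> = ract \<eta> t)"
  unfolding cls_def' by blast

lemma cls_memI: "t \<in> T \<Longrightarrow> p t = p (s \<eta>) \<Longrightarrow> ract \<eta> t \<in> cls \<eta>"
  unfolding cls_mem_iff by blast

lemma cls_refl: assumes e: "\<eta> \<in> H" shows "\<eta> \<in> cls \<eta>"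
proof -
  have "te (p (s \<eta>)) \<in> T" "p (te (p (s \<eta>))) = p (s \<eta>)" using te_T[OF TX[OF sT[OF e]]] by auto
  from cls_memI[OF this] show ?thesis using ract_te[OF e] by simp
qed

lemma cls_H: "\<eta> \<in> H \<Longrightarrow> \<zeta> \<in> cls \<eta> \<Longrightarrow> \<zeta> \<in> H"
  unfolding cls_mem_iff using ract_H by blast

lemma cls_of_mem: assumes e: "\<eta> \<in> H" and z: "\<zeta> \<in> cls \<eta>" shows "cls \<zeta> = cls \<eta>"
proof -
  obtain t where t: "t \<in> T" "p t = p (s \<eta>)" "\<zeta> = ract \<eta> t" using z cls_mem_iff by blast
  have sz: "p (s \<zeta>) = p t" using ract_H[OF e t(1,2)] t by simp
  show ?thesis
  proof
    show "cls \<zeta> \<subseteq> cls \<eta>"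
    proof
      fix x assume "x \<in> cls \<zeta>"
      then obtain u where u: "u \<in> T" "p u = p t" "x = ract \<zeta> u" using cls_mem_iff sz by auto
      have "x = ract \<eta> (tm t u)" using ract_comp[OF e t(1,2) u(1,2)] u t by simp
      moreover have "tm t u \<in> T \<and> p (tm t u) = p (s \<eta>)" using tm_T[OF t(1) u(1)] u t by simp
      ultimately show "x \<in> cls \<eta>" using cls_mem_iff by blast
    qed
  next
    show "cls \<eta> \<subseteq> cls \<zeta>"
    proof
      fix x assume "x \<in> cls \<eta>"
      then obtain v where v: "v \<in> T" "p v = p (s \<eta>)" "x = ract \<eta> v" using cls_mem_iff by auto
      have tit: "ti t \<in> T" "p (ti t) = p t" using ti_T t by auto
      have w: "tm (ti t) v \<in> T" "p (tm (ti t) v) = p t" using tm_T[OF tit(1) v(1)] tit v t by auto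
      have "ract \<zeta> (tm (ti t) v) = ract \<eta> (tm t (tm (ti t) v))" using ract_comp[OF e t(1,2) w(1)] w t by simp
      also have "tm t (tm (ti t) v) = tm (tm t (ti t)) v" using tm_assoc[OF t(1) tit(1) v(1)] tit v t by simp
      also have "... = v" using tm_inv2[OF t(1)] tm_unit[OF v(1)] v t by simp
      finally have "x = ract \<zeta> (tm (ti t) v)" using v by simp
      then show "x \<in> cls \<zeta>" using cls_mem_iff w sz by auto
    qed
  qed
qed

lemma cls_eq_iff: assumes "\<eta> \<in> H" "\<zeta> \<in> H" shows "cls \<zeta> = cls \<eta> \<longleftrightarrow> \<zeta> \<in> cls \<eta>"
proof
  assume "cls \<zeta> = cls \<eta>" then show "\<zeta> \<in> cls \<eta>" using cls_refl[OF assms(2)] by simp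
next
  assume "\<zeta> \<in> cls \<eta>" then show "cls \<zeta> = cls \<eta>" using cls_of_mem[OF assms(1)] by simp
qed

lemma lact_cls: assumes "t \<in> T" "\<eta> \<in> H" "p t = p (r \<eta>)" shows "lact t \<eta> \<in> cls \<eta>"
  using cls_memI[OF rho_T[OF assms] p_rho[OF assms]] l_to_r[OF assms] by simp

lemma i_cls: assumes e: "\<eta> \<in> H" and z: "\<zeta> \<in> cls \<eta>" shows "i \<zeta> \<in> cls (i \<eta>)"
proof -
  obtain t where t: "t \<in> T" "p t = p (s \<eta>)" "\<zeta> = ract \<eta> t" using z cls_mem_iff by blast
  have "i \<zeta> = lact t (i \<eta>)" using i_ract[OF e t(1,2)] t by simp
  moreover have "p t = p (r (i \<eta>))" using r_i[OF e] t by simp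
  ultimately show ?thesis using lact_cls[OF t(1) iH[OF e]] by simp
qed

lemma s_cls: assumes e: "\<eta> \<in> H" and z: "\<zeta> \<in> cls \<eta>" shows "s \<zeta> \<in> cls (s \<eta>)"
proof -
  obtain t where t: "t \<in> T" "p t = p (s \<eta>)" "\<zeta> = ract \<eta> t" using z cls_mem_iff by blast
  have "s \<zeta> = ract (s \<eta>) t" using s_ract[OF e t(1,2)] t by simp
  moreover have "p t = p (s (s \<eta>))" using s_unit[OF sT[OF e]] t by simp
  ultimately show ?thesis using cls_memI[OF t(1)] by simp
qed

lemma r_cls: assumes e: "\<eta> \<in> H" and z: "\<zeta> \<in> cls \<eta>" shows "r \<zeta> \<in> cls (r \<eta>)"
proof -
  obtain t where t: "t \<in> T" "p t = p (s \<eta>)" "\<zeta> = ract \<eta> t" using z cls_mem_iff by blast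
  have l: "lam \<eta> t \<in> T" "p (lam \<eta> t) = p (r \<eta>)" using lam_T p_lam e t by auto
  have "r \<zeta> = r (lact (lam \<eta> t) \<eta>)" using r_to_l e t by simp
  also have "... = lact (lam \<eta> t) (r \<eta>)" using r_lact[OF l(1) e l(2)] .
  finally show ?thesis using lact_cls[OF l(1) rH[OF e]] l r_unit[OF rT[OF e]] by simp
qed

lemma lift_eq:
  assumes fH: "\<And>\<eta>. \<eta> \<in> H \<Longrightarrow> f \<eta> \<in> H"
    and fc: "\<And>\<eta> \<zeta>. \<eta> \<in> H \<Longrightarrow> \<zeta> \<in> cls \<eta> \<Longrightarrow> f \<zeta> \<in> cls (f \<eta>)"
    and e: "\<eta> \<in> H"
  shows "quot_lift cls f (cls \<eta>) = cls (f \<eta>)"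
proof -
  let ?x = "SOME x. x \<in> cls \<eta>"
  have x: "?x \<in> cls \<eta>" using cls_refl[OF e] by (rule someI)
  then have "?x \<in> H" using cls_H e by blast
  then show ?thesis unfolding quot_lift_def using fc[OF e x] cls_of_mem fH e by blast
qed

lemma lift_i: "\<eta> \<in> H \<Longrightarrow> quot_lift cls i (cls \<eta>) = cls (i \<eta>)" using lift_eq iH i_cls by blast
lemma lift_r: "\<eta> \<in> H \<Longrightarrow> quot_lift cls r (cls \<eta>) = cls (r \<eta>)" using lift_eq rH r_cls by blast
lemma lift_s: "\<eta> \<in> H \<Longrightarrow> quot_lift cls s (cls \<eta>) = cls (s \<eta>)" using lift_eq sH s_cls by blast

end

context SA begin

abbreviation "Q \<equiv> cls ` H"
abbreviation "Q2 \<equiv> quot_composable H2 Q"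
abbreviation "Mq \<equiv> quot_mult H2 m"

lemma cls_mem_eq: "A \<in> Q \<Longrightarrow> \<gamma> \<in> A \<Longrightarrow> A = cls \<gamma> \<and> \<gamma> \<in> H"
  using cls_of_mem cls_H by blast

lemma r_ract: assumes e: "\<eta> \<in> H" and b: "b \<in> T" "p b = p (s \<eta>)"
  shows "r (ract \<eta> b) = ract (r \<eta>) (lam \<eta> b)"
proof -
  have l: "lam \<eta> b \<in> T" "p (lam \<eta> b) = p (r \<eta>)" using lam_T p_lam e b by auto
  have "r (ract \<eta> b) = r (lact (lam \<eta> b) \<eta>)" using r_to_l e b by simp
  also have "... = lact (lam \<eta> b) (r \<eta>)" using r_lact[OF l(1) e l(2)] .
  also have "... = ract (r \<eta>) (lam \<eta> b)" using la_unit[OF rT[OF e] l(1)] l by simp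
  finally show ?thesis .
qed

lemma mult_eq: assumes c: "(\<gamma>, \<eta>) \<in> H2" shows "Mq (cls \<gamma>) (cls \<eta>) = cls (m \<gamma> \<eta>)"
proof -
  have g: "\<gamma> \<in> H" and e: "\<eta> \<in> H" using H2H c by auto
  have sr: "s \<gamma> = r \<eta>" using comp_sr c .
  have smg: "s (m \<gamma> \<eta>) = s \<eta>" using s_m c .
  show ?thesis
  proof
    show "Mq (cls \<gamma>) (cls \<eta>) \<subseteq> cls (m \<gamma> \<eta>)"
    proof
      fix x assume "x \<in> Mq (cls \<gamma>) (cls \<eta>)"
      then obtain \<gamma>' \<eta>' where x: "x = m \<gamma>' \<eta>'" "\<gamma>' \<in> cls \<gamma>" "\<eta>' \<in> cls \<eta>" "(\<gamma>', \<eta>') \<in> H2"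
        unfolding quot_mult_def by blast
      obtain a where a: "a \<in> T" "p a = p (s \<gamma>)" "\<gamma>' = ract \<gamma> a" using x(2) cls_mem_iff by blast
      obtain b where b: "b \<in> T" "p b = p (s \<eta>)" "\<eta>' = ract \<eta> b" using x(3) cls_mem_iff by blast
      have l: "lam \<eta> b \<in> T" "p (lam \<eta> b) = p (r \<eta>)" using lam_T p_lam e b by auto
      have "s \<gamma>' = r \<eta>'" using comp_sr x(4) .
      then have "ract (s \<gamma>) a = ract (s \<gamma>) (lam \<eta> b)"
        using s_ract[OF g a(1,2)] r_ract[OF e b(1,2)] a b sr by simp
      then have ab: "a = lam \<eta> b"
        using free_eq[OF sH[OF g] a(1) _ l(1)] a l s_unit[OF sT[OF g]] sr by simp
      have "x = ract (m \<gamma> \<eta>) b" using ract_m[OF c b(1,2)] x a b ab by simp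
      then show "x \<in> cls (m \<gamma> \<eta>)" using cls_memI[OF b(1)] b smg by simp
    qed
  next
    show "cls (m \<gamma> \<eta>) \<subseteq> Mq (cls \<gamma>) (cls \<eta>)"
    proof
      fix x assume "x \<in> cls (m \<gamma> \<eta>)"
      then obtain b where b: "b \<in> T" "p b = p (s \<eta>)" "x = ract (m \<gamma> \<eta>) b" using cls_mem_iff smg by auto
      have l: "lam \<eta> b \<in> T" "p (lam \<eta> b) = p (s \<gamma>)" using lam_T p_lam e b sr by auto
      have x: "x = m (ract \<gamma> (lam \<eta> b)) (ract \<eta> b)" using ract_m[OF c b(1,2)] b by simp
      have m1: "ract \<gamma> (lam \<eta> b) \<in> cls \<gamma>" using cls_memI[OF l] .
      have m2: "ract \<eta> b \<in> cls \<eta>" using cls_memI[OF b(1,2)] .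
      have "s (ract \<gamma> (lam \<eta> b)) = r (ract \<eta> b)"
        using s_ract[OF g l] r_ract[OF e b(1,2)] sr by simp
      then have "(ract \<gamma> (lam \<eta> b), ract \<eta> b) \<in> H2"
        using sr_comp cls_H[OF g m1] cls_H[OF e m2] by blast
      then show "x \<in> Mq (cls \<gamma>) (cls \<eta>)" unfolding quot_mult_def using x m1 m2 by blast
    qed
  qed
qed

lemma adjust: assumes g: "\<gamma> \<in> H" and e: "\<eta> \<in> H" and c: "cls (s \<gamma>) = cls (r \<eta>)"
  shows "\<exists>\<eta>' \<in> cls \<eta>. (\<gamma>, \<eta>') \<in> H2"
proof -
  have "r \<eta> \<in> cls (s \<gamma>)" using c cls_refl[OF rH[OF e]] by simp
  then obtain t where t: "t \<in> T" "p t = p (s \<gamma>)" "r \<eta> = ract (s \<gamma>) t"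
    using cls_mem_iff s_unit[OF sT[OF g]] by auto
  have t2: "p t = p (s (s \<gamma>))" using t s_unit[OF sT[OF g]] by simp
  have prt: "p (r \<eta>) = p t" using ract_H[OF sH[OF g] t(1) t2] t s_unit[OF rT[OF e]] by simp
  have ti: "ti t \<in> T" "p (ti t) = p (r \<eta>)" using ti_T[OF t(1)] prt by auto
  define \<eta>' where "\<eta>' = lact (ti t) \<eta>"
  have m: "\<eta>' \<in> cls \<eta>" using lact_cls[OF ti(1) e ti(2)] \<eta>'_def by simp
  have "r \<eta>' = lact (ti t) (r \<eta>)" using r_lact[OF ti(1) e ti(2)] \<eta>'_def by simp
  also have "... = ract (r \<eta>) (ti t)" using la_unit[OF rT[OF e] ti(1)] ti by simp
  also have "... = ract (s \<gamma>) (tm t (ti t))"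
    using ract_comp[OF sH[OF g] t(1) t2 ti(1)] ti prt t by simp
  also have "... = s \<gamma>" using tm_inv2[OF t(1)] t ract_te[OF sH[OF g]] s_unit[OF sT[OF g]] by simp
  finally have "(\<gamma>, \<eta>') \<in> H2" using sr_comp[OF g cls_H[OF e m]] by simp
  then show ?thesis using m by blast
qed

lemma Q2I: assumes c: "(\<gamma>, \<eta>) \<in> H2" shows "(cls \<gamma>, cls \<eta>) \<in> Q2"
proof -
  have g: "\<gamma> \<in> H" and e: "\<eta> \<in> H" using H2H c by auto
  have "cls \<gamma> \<in> Q" "cls \<eta> \<in> Q" using g e by auto
  moreover have "\<gamma> \<in> cls \<gamma>" "\<eta> \<in> cls \<eta>" using cls_refl g e by auto
  ultimately show ?thesis unfolding quot_composable_def using c by blast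
qed

lemma Q2_rep: assumes "(A, B) \<in> Q2" shows "\<exists>\<gamma> \<eta>. (\<gamma>, \<eta>) \<in> H2 \<and> A = cls \<gamma> \<and> B = cls \<eta>"
proof -
  have AB: "A \<in> Q" "B \<in> Q" and "\<exists>\<gamma>' \<in> A. \<exists>\<eta>' \<in> B. (\<gamma>', \<eta>') \<in> H2"
    using assms unfolding quot_composable_def by auto
  then obtain \<gamma>' \<eta>' where x: "\<gamma>' \<in> A" "\<eta>' \<in> B" "(\<gamma>', \<eta>') \<in> H2" by blast
  have "A = cls \<gamma>'" using cls_mem_eq[OF AB(1) x(1)] by simp
  moreover have "B = cls \<eta>'" using cls_mem_eq[OF AB(2) x(2)] by simp
  ultimately show ?thesis using x(3) by blast
qed

lemma cls_s_eq: "\<eta> \<in> H \<Longrightarrow> \<zeta> \<in> cls \<eta> \<Longrightarrow> cls (s \<zeta>) = cls (s \<eta>)"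
  by (rule cls_of_mem[OF sH s_cls])
lemma cls_r_eq: "\<eta> \<in> H \<Longrightarrow> \<zeta> \<in> cls \<eta> \<Longrightarrow> cls (r \<zeta>) = cls (r \<eta>)"
  by (rule cls_of_mem[OF rH r_cls])

lemma Q2_iff: assumes g: "\<gamma> \<in> H" and e: "\<eta> \<in> H"
  shows "(cls \<gamma>, cls \<eta>) \<in> Q2 \<longleftrightarrow> cls (s \<gamma>) = cls (r \<eta>)"
proof
  assume "(cls \<gamma>, cls \<eta>) \<in> Q2"
  then have "\<exists>\<gamma>' \<in> cls \<gamma>. \<exists>\<eta>' \<in> cls \<eta>. (\<gamma>', \<eta>') \<in> H2"
    unfolding quot_composable_def by simp
  then obtain \<gamma>' \<eta>' where x: "\<gamma>' \<in> cls \<gamma>" "\<eta>' \<in> cls \<eta>" "(\<gamma>', \<eta>') \<in> H2"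
    by blast
  show "cls (s \<gamma>) = cls (r \<eta>)" using comp_sr[OF x(3)] cls_s_eq[OF g x(1)] cls_r_eq[OF e x(2)] by simp
next
  assume "cls (s \<gamma>) = cls (r \<eta>)"
  then obtain \<eta>' where x: "\<eta>' \<in> cls \<eta>" "(\<gamma>, \<eta>') \<in> H2" using adjust g e by blast
  have "cls \<eta>' = cls \<eta>" using cls_of_mem[OF e x(1)] .
  then show "(cls \<gamma>, cls \<eta>) \<in> Q2" using Q2I[OF x(2)] by simp
qed

lemma mult_any: assumes "(A, B) \<in> Q2" "\<gamma>' \<in> A" "\<eta>' \<in> B" "(\<gamma>', \<eta>') \<in> H2"
  shows "Mq A B = cls (m \<gamma>' \<eta>')"
proof -
  have AB: "A \<in> Q" "B \<in> Q" using assms(1) unfolding quot_composable_def by auto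
  have "A = cls \<gamma>'" using cls_mem_eq[OF AB(1) assms(2)] by simp
  moreover have "B = cls \<eta>'" using cls_mem_eq[OF AB(2) assms(3)] by simp
  ultimately show ?thesis using mult_eq[OF assms(4)] by simp
qed

lemma groupoidQ: "groupoid Q Q2 Mq (quot_lift cls i) (quot_lift cls r) (quot_lift cls s)"
  unfolding groupoid_def
proof (intro conjI allI impI ballI)
  show "Q2 \<subseteq> Q \<times> Q" unfolding quot_composable_def by blast
next
  fix A assume "A \<in> Q"
  then obtain \<gamma> where g: "\<gamma> \<in> H" "A = cls \<gamma>" by blast
  show "quot_lift cls i A \<in> Q" using g lift_i iH by simp
  show "quot_lift cls i (quot_lift cls i A) = A" using g lift_i iH ii by simp
  show "(quot_lift cls i A, A) \<in> Q2" using g lift_i Q2I iC by simp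
  show "quot_lift cls r A = Mq A (quot_lift cls i A)" using g lift_i lift_r mult_eq Ci rdef by simp
  show "quot_lift cls s A = Mq (quot_lift cls i A) A" using g lift_i lift_s mult_eq iC sdef by simp
next
  fix A B assume "(A, B) \<in> Q2"
  then obtain \<gamma> \<eta> where c: "(\<gamma>, \<eta>) \<in> H2" "A = cls \<gamma>" "B = cls \<eta>" using Q2_rep by blast
  have g: "\<gamma> \<in> H" and e: "\<eta> \<in> H" using H2H c by auto
  show "Mq A B \<in> Q" using c mult_eq mH by simp
  have 1: "Mq (quot_lift cls i A) (Mq A B) = cls (m (i \<gamma>) (m \<gamma> \<eta>))"
    using c mult_eq lift_i[OF g] assoc[OF iC[OF g] c(1)] by simp
  show "Mq (quot_lift cls i A) (Mq A B) = B" using 1 canc[OF c(1)] c by simp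
  have 2: "Mq (Mq A B) (quot_lift cls i B) = cls (m (m \<gamma> \<eta>) (i \<eta>))"
    using c mult_eq lift_i[OF e] assoc[OF c(1) Ci[OF e]] by simp
  show "Mq (Mq A B) (quot_lift cls i B) = A" using 2 canc[OF c(1)] c by simp
next
  fix A B C assume ab: "(A, B) \<in> Q2 \<and> (B, C) \<in> Q2"
  then obtain \<gamma> \<eta> where c: "(\<gamma>, \<eta>) \<in> H2" "A = cls \<gamma>" "B = cls \<eta>" using Q2_rep by blast
  obtain \<eta>1 \<zeta> where d: "(\<eta>1, \<zeta>) \<in> H2" "B = cls \<eta>1" "C = cls \<zeta>" using Q2_rep ab by blast
  have g: "\<gamma> \<in> H" and e: "\<eta> \<in> H" and e1: "\<eta>1 \<in> H" and z: "\<zeta> \<in> H" using H2H c d by auto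
  have "\<eta>1 \<in> cls \<eta>" using c d cls_refl[OF e1] by simp
  from cls_s_eq[OF e this] have "cls (s \<eta>) = cls (r \<zeta>)" using comp_sr[OF d(1)] by simp
  then obtain \<zeta>' where z': "\<zeta>' \<in> cls \<zeta>" "(\<eta>, \<zeta>') \<in> H2" using adjust e z by blast
  have C: "C = cls \<zeta>'" using cls_of_mem[OF z z'(1)] d by simp
  have as: "(m \<gamma> \<eta>, \<zeta>') \<in> H2 \<and> (\<gamma>, m \<eta> \<zeta>') \<in> H2 \<and> m (m \<gamma> \<eta>) \<zeta>' = m \<gamma> (m \<eta> \<zeta>')"
    using assoc[OF c(1) z'(2)] .
  show "(Mq A B, C) \<in> Q2" using as c C mult_eq Q2I by simp
  show "(A, Mq B C) \<in> Q2" using as c C mult_eq[OF z'(2)] Q2I by simp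
  show "Mq (Mq A B) C = Mq A (Mq B C)" using as c C mult_eq z'(2) by simp
qed

end

context SA begin

abbreviation "Qt \<equiv> quotient_topology Htop cls"
abbreviation "TopT \<equiv> subtopology Htop T"
abbreviation "RDt \<equiv> subtopology HH RD"

lemma openQ: "openin Qt U \<longleftrightarrow> U \<subseteq> Q \<and> openin Htop {x \<in> H. cls x \<in> U}"
  by (rule openin_quotient_topology)

lemma topQ: "topspace Qt = Q"
proof
  show "topspace Qt \<subseteq> Q" using openQ[of "topspace Qt"] by simp
  have "{x \<in> H. cls x \<in> Q} = H" by auto
  then have "openin Qt Q" using openQ[of Q] by simp
  then show "Q \<subseteq> topspace Qt" by (rule openin_subset)
qed

lemma quotQ: "quotient_map Htop Qt cls"
  unfolding quotient_map_def topQ using openQ by auto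

lemma cls_cont: "continuous_map Htop Qt cls"
  using quotQ by (rule quotient_imp_continuous_map)

lemma r_cont: "continuous_map Htop Htop r"
proof -
  have "continuous_map Htop HH (\<lambda>g. (g, i g))"
    by (intro continuous_map_pairedI continuous_map_id[unfolded id_def] icont)
  then have "continuous_map Htop (subtopology HH H2) (\<lambda>g. (g, i g))"
    unfolding continuous_map_in_subtopology using Ci by auto
  from continuous_map_compose[OF this mcont]
  have "continuous_map Htop Htop (\<lambda>g. m g (i g))" by (simp add: o_def)
  then show ?thesis by (rule continuous_map_eq) (simp add: rdef)
qed

lemma s_cont: "continuous_map Htop Htop s"
proof -
  have "continuous_map Htop HH (\<lambda>g. (i g, g))"
    by (intro continuous_map_pairedI continuous_map_id[unfolded id_def] icont)
  then have "continuous_map Htop (subtopology HH H2) (\<lambda>g. (i g, g))"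
    unfolding continuous_map_in_subtopology using iC by auto
  from continuous_map_compose[OF this mcont]
  have "continuous_map Htop Htop (\<lambda>g. m (i g) g)" by (simp add: o_def)
  then show ?thesis by (rule continuous_map_eq) (simp add: sdef)
qed

lemma p_cont: "continuous_map TopT X p" using a2 by (rule quotient_imp_continuous_map)
lemma p_open: "open_map TopT X p" using a3 .

lemma ps_cont: "continuous_map Htop X (\<lambda>x. p (s x))"
proof -
  have "continuous_map Htop TopT s" unfolding continuous_map_in_subtopology using s_cont sT by auto
  from continuous_map_compose[OF this p_cont] show ?thesis by (simp add: o_def)
qed

lemma RD_top: "topspace RDt = RD" using TH by auto

lemma proj_open: assumes P: "openin RDt P" shows "openin Htop (fst ` P)"
  unfolding openin_subopen[of Htop "fst ` P"]
proof
  fix x assume "x \<in> fst ` P"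
  then obtain z where "z \<in> P" "x = fst z" by blast
  then obtain t where xt: "(x, t) \<in> P" by (cases z) simp
  obtain Ob where O: "openin HH Ob" "P = Ob \<inter> RD" using P unfolding openin_subtopology by blast
  have xtO: "(x,t) \<in> Ob" and xtRD: "(x,t) \<in> RD" using xt O by blast+
  have tT: "t \<in> T" and xH: "x \<in> H" and pt: "p t = p (s x)" using xtRD by blast+
  obtain U1 V1 where UV: "openin Htop U1" "openin Htop V1" "x \<in> U1" "t \<in> V1" "U1 \<times> V1 \<subseteq> Ob"
    using iffD1[OF openin_prod_topology_alt O(1), rule_format, OF xtO] by blast
  have "openin TopT (T \<inter> V1)" using openin_subtopology_Int2[OF UV(2)] .
  then have W: "openin X (p ` (T \<inter> V1))" using p_open unfolding open_map_def by blast
  define N where "N = U1 \<inter> {y \<in> H. p (s y) \<in> p ` (T \<inter> V1)}"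
  have "openin Htop N" unfolding N_def using UV(1) openin_continuous_map_preimage[OF ps_cont W] by (rule openin_Int)
  moreover have "p (s x) \<in> p ` (T \<inter> V1)" by (rule image_eqI[of "p (s x)" p t]) (use pt tT UV(4) in simp_all)
  then have "x \<in> N" unfolding N_def using UV(3) xH by blast
  moreover have "N \<subseteq> fst ` P"
  proof
    fix y assume y: "y \<in> N"
    then have yU: "y \<in> U1" "y \<in> H" and "p (s y) \<in> p ` (T \<inter> V1)" unfolding N_def by blast+
    then obtain t' where t': "t' \<in> T \<inter> V1" "p (s y) = p t'" by blast
    have "(y, t') \<in> U1 \<times> V1" using yU t' by blast
    then have "(y, t') \<in> Ob" using UV(5) by blast
    moreover have "(y, t') \<in> RD" using yU(2) t' by simp
    ultimately have "(y, t') \<in> P" using O by blast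
    then show "y \<in> fst ` P" by (rule image_eqI[rotated]) simp
  qed
  ultimately show "\<exists>W. openin Htop W \<and> x \<in> W \<and> W \<subseteq> fst ` P" by blast
qed

lemma sat_eq: assumes U: "U \<subseteq> H"
  shows "{x \<in> H. cls x \<in> cls ` U} = fst ` {z \<in> RD. (\<lambda>(\<eta>, t). ract \<eta> t) z \<in> U}"
proof
  show "{x \<in> H. cls x \<in> cls ` U} \<subseteq> fst ` {z \<in> RD. (\<lambda>(\<eta>, t). ract \<eta> t) z \<in> U}"
  proof
    fix x assume "x \<in> {x \<in> H. cls x \<in> cls ` U}"
    then have xH: "x \<in> H" and "cls x \<in> cls ` U" by blast+
    then obtain u where x: "u \<in> U" "cls x = cls u" by blast
    have uH: "u \<in> H" using x(1) U by blast
    have "u \<in> cls x" using x(2) cls_refl[OF uH] by simp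
    then obtain t where t: "t \<in> T" "p t = p (s x)" "u = ract x t" using cls_mem_iff by blast
    have "(x, t) \<in> RD" using xH t(1,2) by simp
    moreover have "(\<lambda>(\<eta>, t). ract \<eta> t) (x, t) \<in> U" using t(3) x(1) by simp
    ultimately have "(x, t) \<in> {z \<in> RD. (\<lambda>(\<eta>, t). ract \<eta> t) z \<in> U}" by blast
    then show "x \<in> fst ` {z \<in> RD. (\<lambda>(\<eta>, t). ract \<eta> t) z \<in> U}" by (rule image_eqI[rotated]) simp
  qed
next
  show "fst ` {z \<in> RD. (\<lambda>(\<eta>, t). ract \<eta> t) z \<in> U} \<subseteq> {x \<in> H. cls x \<in> cls ` U}"
  proof
    fix x assume "x \<in> fst ` {z \<in> RD. (\<lambda>(\<eta>, t). ract \<eta> t) z \<in> U}"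
    then obtain z where z: "z \<in> RD" "(\<lambda>(\<eta>, t). ract \<eta> t) z \<in> U" "x = fst z" by blast
    obtain t where zt: "z = (x, t)" using z(3) by (cases z) simp
    have t: "x \<in> H" "t \<in> T" "p t = p (s x)" using z(1) unfolding zt by blast+
    have tU: "ract x t \<in> U" using z(2) unfolding zt by simp
    have "cls (ract x t) = cls x" using cls_of_mem[OF t(1) cls_memI[OF t(2,3)]] .
    then have "cls x \<in> cls ` U" using tU by (metis image_eqI)
    then show "x \<in> {x \<in> H. cls x \<in> cls ` U}" using t(1) by blast
  qed
qed

lemma sat_open: assumes U: "openin Htop U" shows "openin Htop {x \<in> H. cls x \<in> cls ` U}"
proof -
  have "openin RDt {z \<in> RD. (\<lambda>(\<eta>, t). ract \<eta> t) z \<in> U}"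
    using openin_continuous_map_preimage[OF ract_cont U] unfolding RD_top .
  from proj_open[OF this] show ?thesis using sat_eq[OF openin_subset[OF U]] by simp
qed

lemma cls_open: assumes U: "openin Htop U" shows "openin Qt (cls ` U)"
  unfolding openQ using sat_open[OF U] openin_subset[OF U] by auto

end

context SA begin

definition "Rrel = (\<lambda>(\<eta>, t). (ract \<eta> t, \<eta>)) ` RD"
definition "dl z = (SOME t. t \<in> T \<and> p t = p (s (snd z)) \<and> ract (snd z) t = fst z)"

lemma R_iff: "(a, b) \<in> Rrel \<longleftrightarrow> b \<in> H \<and> a \<in> cls b"
proof
  assume "(a, b) \<in> Rrel"
  then obtain z where z: "z \<in> RD" "(a, b) = (\<lambda>(\<eta>, t). (ract \<eta> t, \<eta>)) z" unfolding Rrel_def by blast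
  obtain \<eta> t where zt: "z = (\<eta>, t)" by (cases z)
  have e: "\<eta> \<in> H" "t \<in> T" "p t = p (s \<eta>)" using z(1) unfolding zt by blast+
  have ab: "a = ract \<eta> t" "b = \<eta>" using z(2) unfolding zt by simp_all
  show "b \<in> H \<and> a \<in> cls b" using ab e cls_memI[OF e(2,3)] by simp
next
  assume "b \<in> H \<and> a \<in> cls b"
  then obtain t where t: "b \<in> H" "t \<in> T" "p t = p (s b)" "a = ract b t" using cls_mem_iff by blast
  have "(b, t) \<in> RD" using t(1,2,3) by simp
  moreover have "(a, b) = (\<lambda>(\<eta>, t). (ract \<eta> t, \<eta>)) (b, t)" using t(4) by simp
  ultimately show "(a, b) \<in> Rrel" unfolding Rrel_def by (rule rev_image_eqI)
qed

lemma R_sub: "Rrel \<subseteq> H \<times> H"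
proof
  fix z assume "z \<in> Rrel"
  moreover obtain a b where "z = (a, b)" by (cases z)
  ultimately have ab: "b \<in> H \<and> a \<in> cls b" using R_iff[of a b] by simp
  then have "a \<in> H" using cls_H by blast
  then show "z \<in> H \<times> H" using ab \<open>z = (a, b)\<close> by simp
qed

lemma dl_prop: assumes "(a, b) \<in> Rrel"
  shows "dl (a, b) \<in> T \<and> p (dl (a, b)) = p (s b) \<and> ract b (dl (a, b)) = a"
proof -
  have "b \<in> H \<and> a \<in> cls b" using iffD1[OF R_iff assms] .
  then obtain t where "t \<in> T" "p t = p (s b)" "a = ract b t" using iffD1[OF cls_mem_iff] by blast
  then have "\<exists>t. t \<in> T \<and> p t = p (s b) \<and> ract b t = a" by blast
  then have "\<exists>t. t \<in> T \<and> p t = p (s (snd (a, b))) \<and> ract (snd (a, b)) t = fst (a, b)" by simp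
  from someI_ex[OF this] show ?thesis unfolding dl_def by simp
qed

lemma dl_eq: assumes e: "\<eta> \<in> H" and t: "t \<in> T" "p t = p (s \<eta>)" shows "dl (ract \<eta> t, \<eta>) = t"
proof -
  have "(ract \<eta> t, \<eta>) \<in> Rrel" by (rule iffD2[OF R_iff]) (use e cls_memI[OF t] in blast)
  from dl_prop[OF this] have d: "dl (ract \<eta> t, \<eta>) \<in> T" "p (dl (ract \<eta> t, \<eta>)) = p (s \<eta>)"
    "ract \<eta> (dl (ract \<eta> t, \<eta>)) = ract \<eta> t" by blast+
  show ?thesis using free_eq[OF e d(1,2) t d(3)] .
qed

lemma Psi_cont: "continuous_map RDt HH (\<lambda>(\<eta>, t). (ract \<eta> t, \<eta>))"
proof -
  have "continuous_map RDt HH (\<lambda>z. ((\<lambda>(\<eta>, t). ract \<eta> t) z, fst z))"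
    by (intro continuous_map_pairedI ract_cont continuous_map_subtopology_fst)
  then show ?thesis
  proof (rule continuous_map_eq)
    fix z show "((\<lambda>(\<eta>, t). ract \<eta> t) z, fst z) = (\<lambda>(\<eta>, t). (ract \<eta> t, \<eta>)) z" by (cases z) simp
  qed
qed

lemma Psi_inj: "inj_on (\<lambda>(\<eta>, t). (ract \<eta> t, \<eta>)) (topspace RDt)"
  unfolding RD_top
proof (rule inj_onI)
  fix z w assume z: "z \<in> RD" and w: "w \<in> RD" and e: "(\<lambda>(\<eta>, t). (ract \<eta> t, \<eta>)) z = (\<lambda>(\<eta>, t). (ract \<eta> t, \<eta>)) w"
  obtain \<eta> t where zt: "z = (\<eta>, t)" by (cases z)
  obtain \<eta>' t' where wt: "w = (\<eta>', t')" by (cases w)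
  have a: "\<eta> \<in> H" "t \<in> T" "p t = p (s \<eta>)" using z unfolding zt by blast+
  have b: "\<eta>' \<in> H" "t' \<in> T" "p t' = p (s \<eta>')" using w unfolding wt by blast+
  have ee: "ract \<eta> t = ract \<eta>' t' \<and> \<eta> = \<eta>'" using e unfolding zt wt case_prod_conv prod.inject .
  have e1: "\<eta>' = \<eta>" using ee by simp
  have e2: "ract \<eta> t = ract \<eta> t'" using ee e1 by metis
  have b3: "p t' = p (s \<eta>)" using b(3) e1 by simp
  have "t = t'" by (rule free_eq[OF a(1) a(2,3) b(2) b3 e2])
  then show "z = w" using zt wt ee by simp
qed

lemma Psi_emb: "homeomorphic_map RDt (subtopology HH Rrel) (\<lambda>(\<eta>, t). (ract \<eta> t, \<eta>))"
proof -
  have "embedding_map RDt HH (\<lambda>(\<eta>, t). (ract \<eta> t, \<eta>))"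
    by (rule injective_closed_imp_embedding_map[OF Psi_cont proper_imp_closed_map[OF proper_r] Psi_inj])
  then show ?thesis unfolding embedding_map_def RD_top Rrel_def .
qed

lemma topR: "topspace (subtopology HH Rrel) = Rrel" using R_sub by auto

lemma dl_cont: "continuous_map (subtopology HH Rrel) Htop dl"
proof -
  obtain g where g: "homeomorphic_maps RDt (subtopology HH Rrel) (\<lambda>(\<eta>, t). (ract \<eta> t, \<eta>)) g"
    using Psi_emb homeomorphic_map_maps by blast
  then have gc: "continuous_map (subtopology HH Rrel) RDt g"
    and gi: "\<And>y. y \<in> Rrel \<Longrightarrow> (\<lambda>(\<eta>, t). (ract \<eta> t, \<eta>)) (g y) = y"
    unfolding homeomorphic_maps_def topR by blast+
  have "g ` topspace (subtopology HH Rrel) \<subseteq> topspace RDt"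
    using continuous_map_image_subset_topspace[OF gc] .
  then have gR0: "g ` Rrel \<subseteq> RD" unfolding topR RD_top .
  have gR: "\<And>y. y \<in> Rrel \<Longrightarrow> g y \<in> RD" using gR0 by (simp add: image_subset_iff)
  have "continuous_map (subtopology HH Rrel) Htop (snd \<circ> g)"
    using continuous_map_compose[OF gc continuous_map_subtopology_snd] .
  then show ?thesis
  proof (rule continuous_map_eq)
    fix y assume "y \<in> topspace (subtopology HH Rrel)"
    then have y: "y \<in> Rrel" using topR by simp
    obtain \<eta> t where gt: "g y = (\<eta>, t)" by (cases "g y")
    have e: "\<eta> \<in> H" "t \<in> T" "p t = p (s \<eta>)" using gR[OF y] unfolding gt by blast+
    have "y = (ract \<eta> t, \<eta>)" using gi[OF y] unfolding gt by simp
    then show "(snd \<circ> g) y = dl y" using dl_eq[OF e] gt by simp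
  qed
qed

lemma R_closed: "closedin HH Rrel"
proof -
  have "closed_map RDt HH (\<lambda>(\<eta>, t). (ract \<eta> t, \<eta>))" by (rule proper_imp_closed_map[OF proper_r])
  then have "closedin HH ((\<lambda>(\<eta>, t). (ract \<eta> t, \<eta>)) ` topspace RDt)"
    unfolding closed_map_def using closedin_topspace by blast
  then show ?thesis unfolding RD_top Rrel_def .
qed

lemma HausQ: "Hausdorff_space Qt"
  unfolding Hausdorff_space_def topQ
proof (intro allI impI)
  fix A B assume AB: "A \<in> Q \<and> B \<in> Q \<and> A \<noteq> B"
  then obtain x y where xy: "x \<in> H" "y \<in> H" "A = cls x" "B = cls y" by blast
  have nR: "(x, y) \<notin> Rrel"
  proof
    assume "(x, y) \<in> Rrel"
    then have "x \<in> cls y" using iffD1[OF R_iff] by blast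
    from cls_of_mem[OF xy(2) this] have "cls x = cls y" .
    then show False using AB xy by simp
  qed
  have op: "openin HH (topspace HH - Rrel)" using R_closed unfolding closedin_def by blast
  have xyin: "(x, y) \<in> topspace HH - Rrel" using xy nR by simp
  obtain U V where UV: "openin Htop U" "openin Htop V" "x \<in> U" "y \<in> V" "U \<times> V \<subseteq> topspace HH - Rrel"
    using iffD1[OF openin_prod_topology_alt op, rule_format, OF xyin] by blast
  have "disjnt (cls ` U) (cls ` V)"
    unfolding disjnt_def
  proof (rule equals0I)
    fix C assume "C \<in> cls ` U \<inter> cls ` V"
    then obtain u v where uv: "u \<in> U" "v \<in> V" "cls u = cls v" by blast
    have "u \<in> H" "v \<in> H" using uv UV(1,2) openin_subset by blast+
    then have "u \<in> cls v" using iffD1[OF cls_eq_iff uv(3)] by blast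
    then have "(u, v) \<in> Rrel" using iffD2[OF R_iff] \<open>v \<in> H\<close> by blast
    moreover have "(u, v) \<in> U \<times> V" using uv by blast
    ultimately show False using UV(5) by blast
  qed
  then show "\<exists>U V. openin Qt U \<and> openin Qt V \<and> A \<in> U \<and> B \<in> V \<and> disjnt U V"
    using cls_open[OF UV(1)] cls_open[OF UV(2)] UV(3,4) xy(3,4) by blast
qed

lemma iq_cont: "continuous_map Qt Qt (quot_lift cls i)"
proof (rule continuous_compose_quotient_map[OF quotQ])
  have "continuous_map Htop Qt (cls \<circ> i)" using continuous_map_compose[OF icont cls_cont] .
  then show "continuous_map Htop Qt (quot_lift cls i \<circ> cls)"
    by (rule continuous_map_eq) (simp add: lift_i)
qed

lemma rq_cont: "continuous_map Qt Qt (quot_lift cls r)"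
proof (rule continuous_compose_quotient_map[OF quotQ])
  have "continuous_map Htop Qt (cls \<circ> r)" using continuous_map_compose[OF r_cont cls_cont] .
  then show "continuous_map Htop Qt (quot_lift cls r \<circ> cls)"
    by (rule continuous_map_eq) (simp add: lift_r)
qed

end

context SA begin

abbreviation "Ecomp \<equiv> {z \<in> H \<times> H. (r (snd z), s (fst z)) \<in> Rrel}"
definition "Fm z = m (ract (fst z) (dl (r (snd z), s (fst z)))) (snd z)"

lemma Ecomp_props: assumes "z \<in> Ecomp"
  shows "fst z \<in> H" "snd z \<in> H" "dl (r (snd z), s (fst z)) \<in> T"
    "p (dl (r (snd z), s (fst z))) = p (s (fst z))"
    "ract (s (fst z)) (dl (r (snd z), s (fst z))) = r (snd z)"
    "(ract (fst z) (dl (r (snd z), s (fst z))), snd z) \<in> H2"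
    "ract (fst z) (dl (r (snd z), s (fst z))) \<in> cls (fst z)"
proof -
  have z: "fst z \<in> H" "snd z \<in> H" "(r (snd z), s (fst z)) \<in> Rrel" using assms by auto
  note d = dl_prop[OF z(3)]
  show "fst z \<in> H" "snd z \<in> H" using z by auto
  show d1: "dl (r (snd z), s (fst z)) \<in> T" using d by blast
  have "p (dl (r (snd z), s (fst z))) = p (s (s (fst z)))" using d by blast
  then show d2: "p (dl (r (snd z), s (fst z))) = p (s (fst z))" using s_unit[OF sT[OF z(1)]] by simp
  show d3: "ract (s (fst z)) (dl (r (snd z), s (fst z))) = r (snd z)" using d by blast
  have "ract (fst z) (dl (r (snd z), s (fst z))) \<in> H" using ract_H[OF z(1) d1 d2] by blast
  moreover have "s (ract (fst z) (dl (r (snd z), s (fst z)))) = r (snd z)" using s_ract[OF z(1) d1 d2] d3 by simp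
  ultimately show "(ract (fst z) (dl (r (snd z), s (fst z))), snd z) \<in> H2" using sr_comp z(2) by blast
  show "ract (fst z) (dl (r (snd z), s (fst z))) \<in> cls (fst z)" using cls_memI[OF d1 d2] .
qed

lemma Fm_cont: "continuous_map (subtopology HH Ecomp) Htop Fm"
proof -
  let ?E = "subtopology HH Ecomp"
  have c1: "continuous_map ?E Htop (\<lambda>z. r (snd z))"
    using continuous_map_compose[OF continuous_map_subtopology_snd r_cont] by (simp add: o_def)
  have c2: "continuous_map ?E Htop (\<lambda>z. s (fst z))"
    using continuous_map_compose[OF continuous_map_subtopology_fst s_cont] by (simp add: o_def)
  have c3: "continuous_map ?E HH (\<lambda>z. (r (snd z), s (fst z)))"
    using continuous_map_pairedI[OF c1 c2] .
  have c3': "continuous_map ?E (subtopology HH Rrel) (\<lambda>z. (r (snd z), s (fst z)))"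
    unfolding continuous_map_in_subtopology using c3 by auto
  have c4: "continuous_map ?E Htop (\<lambda>z. dl (r (snd z), s (fst z)))"
    using continuous_map_compose[OF c3' dl_cont] by (simp add: o_def)
  have c5: "continuous_map ?E HH (\<lambda>z. (fst z, dl (r (snd z), s (fst z))))"
    using continuous_map_pairedI[OF continuous_map_subtopology_fst c4] .
  have c5': "continuous_map ?E RDt (\<lambda>z. (fst z, dl (r (snd z), s (fst z))))"
    unfolding continuous_map_in_subtopology
  proof
    show "(\<lambda>z. (fst z, dl (r (snd z), s (fst z)))) \<in> topspace ?E \<rightarrow> RD"
    proof
      fix z assume "z \<in> topspace ?E"
      then have z: "z \<in> Ecomp" by simp
      show "(fst z, dl (r (snd z), s (fst z))) \<in> RD" using Ecomp_props[OF z] by simp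
    qed
  qed (rule c5)
  have c6: "continuous_map ?E Htop (\<lambda>z. ract (fst z) (dl (r (snd z), s (fst z))))"
    using continuous_map_compose[OF c5' ract_cont] by (simp add: o_def)
  have c7: "continuous_map ?E HH (\<lambda>z. (ract (fst z) (dl (r (snd z), s (fst z))), snd z))"
    using continuous_map_pairedI[OF c6 continuous_map_subtopology_snd] .
  have c7': "continuous_map ?E (subtopology HH H2) (\<lambda>z. (ract (fst z) (dl (r (snd z), s (fst z))), snd z))"
    unfolding continuous_map_in_subtopology
  proof
    show "(\<lambda>z. (ract (fst z) (dl (r (snd z), s (fst z))), snd z)) \<in> topspace ?E \<rightarrow> H2"
    proof
      fix z assume "z \<in> topspace ?E"
      then have z: "z \<in> Ecomp" by simp
      show "(ract (fst z) (dl (r (snd z), s (fst z))), snd z) \<in> H2" using Ecomp_props(6)[OF z] .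
    qed
  qed (rule c7)
  show ?thesis using continuous_map_compose[OF c7' mcont] by (simp add: o_def Fm_def[abs_def])
qed

lemma Fm_cls: assumes z: "z \<in> Ecomp" shows "Mq (cls (fst z)) (cls (snd z)) = cls (Fm z)"
proof -
  have "Mq (cls (ract (fst z) (dl (r (snd z), s (fst z))))) (cls (snd z)) = cls (Fm z)"
    unfolding Fm_def by (rule mult_eq[OF Ecomp_props(6)[OF z]])
  moreover have "cls (ract (fst z) (dl (r (snd z), s (fst z)))) = cls (fst z)"
    using cls_of_mem[OF Ecomp_props(1)[OF z] Ecomp_props(7)[OF z]] .
  ultimately show ?thesis by simp
qed

lemma unit_R: "u \<in> H \<Longrightarrow> (s u, s u) \<in> Rrel"
  using iffD2[OF R_iff] cls_refl sH by blast

lemma dl_unit: assumes g: "g \<in> H" shows "dl (s g, s g) = te (p (s g))"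
proof -
  have su: "s (s g) = s g" using s_unit[OF sT[OF g]] .
  have t: "te (p (s g)) \<in> T" "p (te (p (s g))) = p (s (s g))" using te_T[OF TX[OF sT[OF g]]] su by auto
  have "dl (ract (s g) (te (p (s g))), s g) = te (p (s g))" using dl_eq[OF sH[OF g] t] .
  moreover have "ract (s g) (te (p (s g))) = s g" using ract_te[OF sH[OF g]] su by simp
  ultimately show ?thesis by simp
qed

lemma Fm_H2: assumes c: "(g, h) \<in> H2" shows "(g, h) \<in> Ecomp" "Fm (g, h) = m g h"
proof -
  have g: "g \<in> H" and h: "h \<in> H" using H2H c by auto
  have e: "r h = s g" using comp_sr[OF c] by simp
  show "(g, h) \<in> Ecomp" using g h unit_R[OF g] e by simp
  show "Fm (g, h) = m g h" unfolding Fm_def using dl_unit[OF g] e ract_te[OF g] by simp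
qed

lemma Mq_cont: "continuous_map (subtopology (prod_topology Qt Qt) Q2) Qt (\<lambda>(A, B). Mq A B)"
  unfolding continuous_map_def
proof (intro conjI allI impI)
  let ?S = "subtopology (prod_topology Qt Qt) Q2"
  have topS: "topspace ?S = Q2"
    unfolding topspace_subtopology topspace_prod_topology topQ quot_composable_def by blast
  show "(\<lambda>(A, B). Mq A B) \<in> topspace ?S \<rightarrow> topspace Qt"
  proof
    fix z assume "z \<in> topspace ?S"
    then have z: "z \<in> Q2" using topS by simp
    obtain A B where zAB: "z = (A, B)" by (cases z)
    obtain \<gamma> \<eta> where c: "(\<gamma>, \<eta>) \<in> H2" "A = cls \<gamma>" "B = cls \<eta>" using Q2_rep z zAB by blast
    have "Mq A B = cls (m \<gamma> \<eta>)" using mult_eq[OF c(1)] c by simp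
    then show "(\<lambda>(A, B). Mq A B) z \<in> topspace Qt" using mH[OF c(1)] zAB topQ by simp
  qed
next
  fix W assume W: "openin Qt W"
  let ?S = "subtopology (prod_topology Qt Qt) Q2"
  have topS: "topspace ?S = Q2"
    unfolding topspace_subtopology topspace_prod_topology topQ quot_composable_def by blast
  have W': "openin Htop {x \<in> H. cls x \<in> W}" using iffD1[OF openQ W] by blast
  show "openin ?S {z \<in> topspace ?S. (\<lambda>(A, B). Mq A B) z \<in> W}"
  proof (rule iffD2[OF openin_subopen], rule ballI)
    fix z assume zS: "z \<in> {z \<in> topspace ?S. (\<lambda>(A, B). Mq A B) z \<in> W}"
    obtain A B where zAB: "z = (A, B)" by (cases z)
    have "z \<in> topspace ?S" and zW: "(\<lambda>(A, B). Mq A B) z \<in> W" using zS by blast+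
    then have zQ: "(A, B) \<in> Q2" using zAB topS by simp
    have MW: "Mq A B \<in> W" using zW zAB by simp
    obtain \<gamma> \<eta> where c: "(\<gamma>, \<eta>) \<in> H2" "A = cls \<gamma>" "B = cls \<eta>" using Q2_rep zQ by blast
    have g: "\<gamma> \<in> H" and h: "\<eta> \<in> H" using H2H[OF c(1)] by blast+
    have "openin (subtopology HH Ecomp) {z \<in> topspace (subtopology HH Ecomp). Fm z \<in> {x \<in> H. cls x \<in> W}}"
      using openin_continuous_map_preimage[OF Fm_cont W'] .
    then obtain Ob where Ob: "openin HH Ob"
      "{z \<in> topspace (subtopology HH Ecomp). Fm z \<in> {x \<in> H. cls x \<in> W}} = Ob \<inter> Ecomp"
      unfolding openin_subtopology by blast
    have gE: "(\<gamma>, \<eta>) \<in> Ecomp" and gF: "Fm (\<gamma>, \<eta>) = m \<gamma> \<eta>" using Fm_H2[OF c(1)] by blast+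
    have "cls (m \<gamma> \<eta>) \<in> W" using MW unfolding c(2,3) mult_eq[OF c(1)] .
    then have "Fm (\<gamma>, \<eta>) \<in> {x \<in> H. cls x \<in> W}" using gF mH[OF c(1)] by simp
    moreover have "(\<gamma>, \<eta>) \<in> topspace (subtopology HH Ecomp)" using gE by simp
    ultimately have "(\<gamma>, \<eta>) \<in> {z \<in> topspace (subtopology HH Ecomp). Fm z \<in> {x \<in> H. cls x \<in> W}}" by blast
    then have "(\<gamma>, \<eta>) \<in> Ob \<inter> Ecomp" unfolding Ob(2) .
    then have gOb: "(\<gamma>, \<eta>) \<in> Ob" by blast
    obtain U V where UV: "openin Htop U" "openin Htop V" "\<gamma> \<in> U" "\<eta> \<in> V" "U \<times> V \<subseteq> Ob"
      using iffD1[OF openin_prod_topology_alt Ob(1), rule_format, OF gOb] by blast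
    have UH: "U \<subseteq> H" and VH: "V \<subseteq> H" using openin_subset[OF UV(1)] openin_subset[OF UV(2)] by blast+
    let ?T = "(cls ` U \<times> cls ` V) \<inter> Q2"
    have "openin (prod_topology Qt Qt) (cls ` U \<times> cls ` V)"
      using cls_open[OF UV(1)] cls_open[OF UV(2)] by (simp add: openin_prod_Times_iff)
    then have "openin ?S ?T" by (rule openin_subtopology_Int)
    moreover have "z \<in> ?T"
    proof -
      have "A \<in> cls ` U" using c(2) UV(3) by blast
      moreover have "B \<in> cls ` V" using c(3) UV(4) by blast
      ultimately show ?thesis using zAB zQ by blast
    qed
    moreover have "?T \<subseteq> {z \<in> topspace ?S. (\<lambda>(A, B). Mq A B) z \<in> W}"
    proof
      fix y assume y: "y \<in> ?T"
      obtain A' B' where yAB: "y = (A', B')" by (cases y)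
      have yQ: "(A', B') \<in> Q2" using y yAB by blast
      obtain g' h' where gh: "g' \<in> U" "h' \<in> V" "A' = cls g'" "B' = cls h'" using y yAB by blast
      have g'H: "g' \<in> H" and h'H: "h' \<in> H" using gh UH VH by auto
      have "cls (s g') = cls (r h')" using iffD1[OF Q2_iff[OF g'H h'H]] yQ gh by simp
      then have "r h' \<in> cls (s g')" using cls_refl[OF rH[OF h'H]] by simp
      then have "(r h', s g') \<in> Rrel" using iffD2[OF R_iff] sH[OF g'H] by blast
      then have E: "(g', h') \<in> Ecomp" using g'H h'H by simp
      have "(g', h') \<in> Ob" using UV(5) gh by blast
      then have "(g', h') \<in> Ob \<inter> Ecomp" using E by blast
      then have "(g', h') \<in> {z \<in> topspace (subtopology HH Ecomp). Fm z \<in> {x \<in> H. cls x \<in> W}}"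
        unfolding Ob(2)[symmetric] .
      then have "cls (Fm (g', h')) \<in> W" by simp
      then have "Mq A' B' \<in> W" using Fm_cls[OF E] gh by simp
      then show "y \<in> {z \<in> topspace ?S. (\<lambda>(A, B). Mq A B) z \<in> W}" using yAB yQ topS by simp
    qed
    ultimately show "\<exists>T'. openin ?S T' \<and> z \<in> T' \<and> T' \<subseteq> {z \<in> topspace ?S. (\<lambda>(A, B). Mq A B) z \<in> W}"
      by blast
  qed
qed

end

context SA begin

abbreviation "Ep \<equiv> {z \<in> H \<times> H. (r (fst z), r (snd z)) \<in> Rrel}"
definition "Gl z = lact (dl (r (fst z), r (snd z))) (snd z)"

lemma Ep_props: assumes "z \<in> Ep"
  shows "dl (r (fst z), r (snd z)) \<in> T" "p (dl (r (fst z), r (snd z))) = p (r (snd z))"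
    "ract (r (snd z)) (dl (r (fst z), r (snd z))) = r (fst z)"
proof -
  have z: "fst z \<in> H" "snd z \<in> H" "(r (fst z), r (snd z)) \<in> Rrel" using assms by auto
  note d = dl_prop[OF z(3)]
  show "dl (r (fst z), r (snd z)) \<in> T" using d by blast
  have "p (dl (r (fst z), r (snd z))) = p (s (r (snd z)))" using d by blast
  then show "p (dl (r (fst z), r (snd z))) = p (r (snd z))" using s_unit[OF rT[OF z(2)]] by simp
  show "ract (r (snd z)) (dl (r (fst z), r (snd z))) = r (fst z)" using d by blast
qed

lemma Gl_cont: "continuous_map (subtopology HH Ep) Htop Gl"
proof -
  let ?E = "subtopology HH Ep"
  have c1: "continuous_map ?E Htop (\<lambda>z. r (fst z))"
    using continuous_map_compose[OF continuous_map_subtopology_fst r_cont] by (simp add: o_def)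
  have c2: "continuous_map ?E Htop (\<lambda>z. r (snd z))"
    using continuous_map_compose[OF continuous_map_subtopology_snd r_cont] by (simp add: o_def)
  have c3: "continuous_map ?E HH (\<lambda>z. (r (fst z), r (snd z)))"
    using continuous_map_pairedI[OF c1 c2] .
  have c3': "continuous_map ?E (subtopology HH Rrel) (\<lambda>z. (r (fst z), r (snd z)))"
    unfolding continuous_map_in_subtopology using c3 by auto
  have c4: "continuous_map ?E Htop (\<lambda>z. dl (r (fst z), r (snd z)))"
    using continuous_map_compose[OF c3' dl_cont] by (simp add: o_def)
  have c5: "continuous_map ?E HH (\<lambda>z. (dl (r (fst z), r (snd z)), snd z))"
    using continuous_map_pairedI[OF c4 continuous_map_subtopology_snd] .
  have c5': "continuous_map ?E (subtopology HH LD) (\<lambda>z. (dl (r (fst z), r (snd z)), snd z))"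
    unfolding continuous_map_in_subtopology
  proof
    show "(\<lambda>z. (dl (r (fst z), r (snd z)), snd z)) \<in> topspace ?E \<rightarrow> LD"
    proof
      fix z assume "z \<in> topspace ?E"
      then have z: "z \<in> Ep" by simp
      have "snd z \<in> H" using z by auto
      then show "(dl (r (fst z), r (snd z)), snd z) \<in> LD" using Ep_props[OF z] by simp
    qed
  qed (rule c5)
  show ?thesis using continuous_map_compose[OF c5' lact_cont] by (simp add: o_def Gl_def[abs_def])
qed

lemma Gl_diag: assumes g: "g \<in> H" shows "(g, g) \<in> Ep" "Gl (g, g) = g"
proof -
  have rg: "r g \<in> H" "s (r g) = r g" using rH[OF g] s_unit[OF rT[OF g]] by auto
  have "(s (r g), s (r g)) \<in> Rrel" using unit_R[OF rg(1)] .
  then show "(g, g) \<in> Ep" using g rg(2) by simp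
  have "dl (s (r g), s (r g)) = te (p (s (r g)))" using dl_unit[OF rg(1)] .
  then have "dl (r g, r g) = te (p (r g))" using rg(2) by simp
  then show "Gl (g, g) = g" unfolding Gl_def using lact_te[OF g] by simp
qed

lemma rq_loc: "local_homeomorphism Qt Qt (quot_lift cls r)"
  unfolding local_homeomorphism_def
proof (intro conjI ballI)
  show "quot_lift cls r ` topspace Qt \<subseteq> topspace Qt"
    using continuous_map_image_subset_topspace[OF rq_cont] .
next
  fix A assume "A \<in> topspace Qt"
  then obtain \<gamma> where g: "\<gamma> \<in> H" "A = cls \<gamma>" using topQ by blast
  obtain U where U: "openin Htop U" "\<gamma> \<in> U" "openin Htop (r ` U)"
      "homeomorphic_map (subtopology Htop U) (subtopology Htop (r ` U)) r"
    using Hloc g(1) unfolding local_homeomorphism_def by blast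
  have UH: "U \<subseteq> H" using openin_subset[OF U(1)] .
  have tU: "topspace (subtopology Htop U) = U" using UH by auto
  have rinj: "inj_on r U" using homeomorphic_imp_injective_map[OF U(4)] tU by simp
  have ropen: "openin Htop (r ` N')" if N': "openin Htop N'" "N' \<subseteq> U" for N'
  proof -
    have "open_map (subtopology Htop U) (subtopology Htop (r ` U)) r"
      using homeomorphic_imp_open_map[OF U(4)] .
    moreover have "openin (subtopology Htop U) N'" using N' U(1) openin_open_subtopology by blast
    ultimately have "openin (subtopology Htop (r ` U)) (r ` N')" unfolding open_map_def by blast
    then show ?thesis using openin_trans_full U(3) by blast
  qed
  have "openin (subtopology HH Ep) {z \<in> topspace (subtopology HH Ep). Gl z \<in> U}"
    using openin_continuous_map_preimage[OF Gl_cont U(1)] .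
  then obtain Ob where Ob: "openin HH Ob" "{z \<in> topspace (subtopology HH Ep). Gl z \<in> U} = Ob \<inter> Ep"
    unfolding openin_subtopology by blast
  have "(\<gamma>, \<gamma>) \<in> {z \<in> topspace (subtopology HH Ep). Gl z \<in> U}"
    using Gl_diag[OF g(1)] U(2) by simp
  then have "(\<gamma>, \<gamma>) \<in> Ob \<inter> Ep" unfolding Ob(2) .
  then have gOb: "(\<gamma>, \<gamma>) \<in> Ob" by blast
  obtain N2 N1 where NN: "openin Htop N2" "openin Htop N1" "\<gamma> \<in> N2" "\<gamma> \<in> N1" "N2 \<times> N1 \<subseteq> Ob"
    using iffD1[OF openin_prod_topology_alt Ob(1), rule_format, OF gOb] by blast
  define N where "N = N1 \<inter> N2 \<inter> U"
  have Nopen: "openin Htop N" unfolding N_def using NN(1,2) U(1) by blast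
  have gN: "\<gamma> \<in> N" unfolding N_def using NN(3,4) U(2) by blast
  have NU: "N \<subseteq> U" unfolding N_def by blast
  have NH: "N \<subseteq> H" using NU UH by blast
  let ?rq = "quot_lift cls r"
  let ?U = "cls ` N"
  have Uo: "openin Qt ?U" using cls_open[OF Nopen] .
  have AU: "A \<in> ?U" using g(2) gN by blast
  have rqimg: "?rq ` cls ` N' = cls ` r ` N'" if "N' \<subseteq> H" for N'
  proof -
    have "?rq ` cls ` N' = (\<lambda>x. ?rq (cls x)) ` N'" by (simp add: image_image)
    also have "... = (\<lambda>x. cls (r x)) ` N'" using lift_r that by (intro image_cong) auto
    also have "... = cls ` r ` N'" by (simp add: image_image)
    finally show ?thesis .
  qed
  have rUo: "openin Qt (?rq ` ?U)" unfolding rqimg[OF NH] using cls_open[OF ropen[OF Nopen NU]] .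
  have UQ: "?U \<subseteq> Q" using NH by blast
  have rUQ: "?rq ` ?U \<subseteq> Q" unfolding rqimg[OF NH] using rH NH by blast
  have inj: "inj_on ?rq ?U"
  proof (rule inj_onI)
    fix B C assume B: "B \<in> ?U" and C: "C \<in> ?U" and e: "?rq B = ?rq C"
    obtain x1 where x1: "x1 \<in> N" "B = cls x1" using B by blast
    obtain x2 where x2: "x2 \<in> N" "C = cls x2" using C by blast
    have x1H: "x1 \<in> H" and x2H: "x2 \<in> H" using x1 x2 NH by blast+
    have "cls (r x1) = cls (r x2)" using e x1 x2 lift_r x1H x2H by simp
    then have "r x2 \<in> cls (r x1)" using iffD1[OF cls_eq_iff[OF rH[OF x1H] rH[OF x2H]]] by simp
    then have "(r x2, r x1) \<in> Rrel" using iffD2[OF R_iff] rH[OF x1H] by blast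
    then have E: "(x2, x1) \<in> Ep" using x1H x2H by simp
    have "(x2, x1) \<in> N2 \<times> N1" using x1 x2 unfolding N_def by blast
    then have "(x2, x1) \<in> Ob \<inter> Ep" using NN(5) E by blast
    then have "(x2, x1) \<in> {z \<in> topspace (subtopology HH Ep). Gl z \<in> U}" unfolding Ob(2)[symmetric] .
    then have GU: "Gl (x2, x1) \<in> U" by simp
    note d = Ep_props[OF E]
    have d1: "dl (r x2, r x1) \<in> T" and d2: "p (dl (r x2, r x1)) = p (r x1)"
      and d3: "ract (r x1) (dl (r x2, r x1)) = r x2" using d by simp_all
    have "r (Gl (x2, x1)) = lact (dl (r x2, r x1)) (r x1)"
      unfolding Gl_def using r_lact[OF d1 x1H d2] by simp
    also have "... = ract (r x1) (dl (r x2, r x1))" using la_unit[OF rT[OF x1H] d1] d2 by simp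
    also have "... = r x2" using d3 .
    finally have "r (Gl (x2, x1)) = r x2" .
    then have "Gl (x2, x1) = x2" using rinj GU x2(1) NU unfolding inj_on_def by blast
    moreover have "Gl (x2, x1) \<in> cls x1" unfolding Gl_def using lact_cls[OF d1 x1H d2] by simp
    ultimately have "x2 \<in> cls x1" by simp
    then show "B = C" using cls_of_mem[OF x1H] x1 x2 by simp
  qed
  have hm: "homeomorphic_map (subtopology Qt ?U) (subtopology Qt (?rq ` ?U)) ?rq"
  proof (rule bijective_open_imp_homeomorphic_map)
    show "continuous_map (subtopology Qt ?U) (subtopology Qt (?rq ` ?U)) ?rq"
      unfolding continuous_map_in_subtopology
      using continuous_map_from_subtopology[OF rq_cont] topQ UQ by auto
    show "open_map (subtopology Qt ?U) (subtopology Qt (?rq ` ?U)) ?rq"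
      unfolding open_map_def
    proof (intro allI impI)
      fix W assume W: "openin (subtopology Qt ?U) W"
      have Wo: "openin Qt W" and WU: "W \<subseteq> ?U" using iffD1[OF openin_open_subtopology[OF Uo] W] by blast+
      define N' where "N' = N \<inter> {x \<in> H. cls x \<in> W}"
      have N'o: "openin Htop N'" unfolding N'_def using Nopen iffD1[OF openQ Wo] by blast
      have N'N: "N' \<subseteq> N" unfolding N'_def by blast
      have WN': "W = cls ` N'"
      proof
        show "W \<subseteq> cls ` N'"
        proof
          fix B assume "B \<in> W"
          moreover then obtain x where "x \<in> N" "B = cls x" using WU by blast
          ultimately show "B \<in> cls ` N'" unfolding N'_def using NH by blast
        qed
        show "cls ` N' \<subseteq> W" unfolding N'_def by blast
      qed
      have "?rq ` W = cls ` r ` N'" unfolding WN' using rqimg N'N NH by blast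
      then have "openin Qt (?rq ` W)" using cls_open[OF ropen[OF N'o]] N'N NU by auto
      moreover have "?rq ` W \<subseteq> ?rq ` ?U" using WU by blast
      ultimately show "openin (subtopology Qt (?rq ` ?U)) (?rq ` W)"
        using openin_open_subtopology[OF rUo] by blast
    qed
    have t1: "topspace (subtopology Qt ?U) = ?U" using UQ topQ by (simp add: Int_absorb1)
    have t2: "topspace (subtopology Qt (?rq ` ?U)) = ?rq ` ?U" using rUQ topQ by (simp add: Int_absorb1)
    show "?rq ` topspace (subtopology Qt ?U) = topspace (subtopology Qt (?rq ` ?U))"
      unfolding t1 t2 ..
    show "inj_on ?rq (topspace (subtopology Qt ?U))" unfolding t1 by (rule inj)
  qed
  show "\<exists>U. openin Qt U \<and> A \<in> U \<and> openin Qt (?rq ` U) \<and>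
          homeomorphic_map (subtopology Qt U) (subtopology Qt (?rq ` U)) ?rq"
    using Uo AU rUo hm by blast
qed

lemma main_loc:
  "hausdorff_etale_groupoid Qt Q2 Mq (quot_lift cls i) (quot_lift cls r) (quot_lift cls s)
     \<and> topspace Qt = Q
     \<and> (\<forall>A B \<gamma>' \<eta>'. (A, B) \<in> Q2 \<and> \<gamma>' \<in> A \<and> \<eta>' \<in> B \<and> (\<gamma>', \<eta>') \<in> H2
          \<longrightarrow> Mq A B = cls (m \<gamma>' \<eta>'))
     \<and> (\<forall>\<gamma> \<in> H. quot_lift cls i (cls \<gamma>) = cls (i \<gamma>))
     \<and> (\<forall>\<gamma> \<in> H. quot_lift cls r (cls \<gamma>) = cls (r \<gamma>))
     \<and> (\<forall>\<gamma> \<in> H. quot_lift cls s (cls \<gamma>) = cls (s \<gamma>))"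
proof (intro conjI allI impI ballI)
  show "hausdorff_etale_groupoid Qt Q2 Mq (quot_lift cls i) (quot_lift cls r) (quot_lift cls s)"
    unfolding hausdorff_etale_groupoid_def topological_groupoid_def topQ
    using groupoidQ Mq_cont iq_cont HausQ rq_loc by blast
  show "topspace Qt = Q" by (rule topQ)
next
  fix A B \<gamma>' \<eta>' assume "(A, B) \<in> Q2 \<and> \<gamma>' \<in> A \<and> \<eta>' \<in> B \<and> (\<gamma>', \<eta>') \<in> H2"
  then show "Mq A B = cls (m \<gamma>' \<eta>')" using mult_any by blast
qed (simp_all add: lift_i lift_r lift_s)

end

theorem mainTheorem11:
  fixes Htop :: "'h topology" and X :: "'x topology"
    and H2 :: "('h \<times> 'h) set" and m :: "'h \<Rightarrow> 'h \<Rightarrow> 'h" and i r s :: "'h \<Rightarrow> 'h"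
    and p :: "'h \<Rightarrow> 'x" and tm :: "'h \<Rightarrow> 'h \<Rightarrow> 'h" and te :: "'x \<Rightarrow> 'h" and ti :: "'h \<Rightarrow> 'h"
    and lact ract lam rho :: "'h \<Rightarrow> 'h \<Rightarrow> 'h"
  assumes A: "standing_assumption Htop H2 m i r s X p tm te ti lact ract lam rho"
  defines "H \<equiv> topspace Htop"
    and "T \<equiv> unit_space (topspace Htop) r"
    and "cls \<equiv> orbit_class (unit_space (topspace Htop) r) p s ract"
  shows
    "hausdorff_etale_groupoid (quotient_topology Htop cls)
        (quot_composable H2 (cls ` H)) (quot_mult H2 m)
        (quot_lift cls i) (quot_lift cls r) (quot_lift cls s)
     \<and> topspace (quotient_topology Htop cls) = cls ` H
     \<and> (\<forall>A B \<gamma>' \<eta>'. (A, B) \<in> quot_composable H2 (cls ` H) \<and> \<gamma>' \<in> A \<and> \<eta>' \<in> B \<and> (\<gamma>', \<eta>') \<in> H2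
          \<longrightarrow> quot_mult H2 m A B = cls (m \<gamma>' \<eta>'))
     \<and> (\<forall>\<gamma> \<in> H. quot_lift cls i (cls \<gamma>) = cls (i \<gamma>))
     \<and> (\<forall>\<gamma> \<in> H. quot_lift cls r (cls \<gamma>) = cls (r \<gamma>))
     \<and> (\<forall>\<gamma> \<in> H. quot_lift cls s (cls \<gamma>) = cls (s \<gamma>))"
proof -
  interpret SA Htop H2 m i r s X p tm te ti lact ract lam rho using A by unfold_locales
  show ?thesis using main_loc unfolding H_def T_def cls_def unit_space_def .
qed

end
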